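(* Consider the $2$-user symmetric linear deterministic Z interference channel with unidirectional, rate-limited transmitter cooperation of capacity $C$ (a nonnegative integer) from transmitter $2$ to transmitter $1$, with integer parameters $m\ge 1$, $n\ge 0$, and suppose $1<\alpha<2$, where $\alpha=n/m$. Then the secrecy capacity region (under the perfect secrecy constraint) is the set of all $(R_1,R_2)$ with $R_1\ge0$, $R_2\ge0$ and $$R_1\le m,\qquad R_2\le 2m-n,\qquad R_1+R_2\le m+C.$$
   Context: Model: let $q=\max\{m,n\}$ and let $\mathbf{D}$ be the $q\times q$ downshift matrix over $\mathbb{F}_2$ (entries $d_{j',j''}=1$ if $2\le j'=j''+1\le q$, and $0$ otherwise). At each channel use, transmitter $i$ sends $\mathbf{x}_i\in\mathbb{F}_2^q$, and the outputs are $\mathbf{y}_1=\mathbf{D}^{q-m}\mathbf{x}_1\oplus\mathbf{D}^{q-n}\mathbf{x}_2$ and $\mathbf{y}_2=\mathbf{D}^{q-m}\mathbf{x}_2$, where $\oplus$ is componentwise addition mod $2$. Transmitter $i$ has a message $W_i$ uniform on $\{1,\dots,2^{NR_i}\}$ ($N$ = block length, rates in bits per channel use). Transmitter $2$ can send to transmitter $1$, over a noiseless secure link, at most $C$ bits per channel use; transmitter $2$'s signal depends only on $W_2$ (and possibly its own randomness), while transmitter $1$'s signal at each time is a function of $W_1$, the bits received so far over the cooperative link (causality), and possibly locally generated random bits. Receiver $i$ decodes $W_i$ from $\mathbf{y}_i^N$. A rate pair is achievable with perfect secrecy if there are such codes with decoding error probability tending to $0$ as $N\to\infty$ and $I(W_i;\mathbf{y}_j^N)=0$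 for $i\neq j$. The secrecy capacity region is the closure of the set of achievable rate pairs. *)

theory Defs
  imports "HOL-Probability.Probability"
begin

text \<open>Vectors in F_2^q are represented as functions nat => bool, where only the
components 1..q are meaningful (True = 1, False = 0); q x q matrices over F_2 as
functions nat => nat => bool with indices in 1..q.\<close>

type_synonym f2vec = "nat \<Rightarrow> bool"
type_synonym f2mat = "nat \<Rightarrow> nat \<Rightarrow> bool"

definition vadd :: "f2vec \<Rightarrow> f2vec \<Rightarrow> f2vec" where
  "vadd x y = (\<lambda>j. x j \<noteq> y j)"

definition mvmult :: "nat \<Rightarrow> f2mat \<Rightarrow> f2vec \<Rightarrow> f2vec" where
  "mvmult q A x = (\<lambda>j. 1 \<le> j \<and> j \<le> q \<and> odd (card {k \<in> {1..q}. A j k \<and> x k}))"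

definition mmult :: "nat \<Rightarrow> f2mat \<Rightarrow> f2mat \<Rightarrow> f2mat" where
  "mmult q A B = (\<lambda>j k. 1 \<le> j \<and> j \<le> q \<and> 1 \<le> k \<and> k \<le> q \<and>
                      odd (card {l \<in> {1..q}. A j l \<and> B l k}))"

definition mone :: "nat \<Rightarrow> f2mat" where
  "mone q = (\<lambda>j k. 1 \<le> j \<and> j \<le> q \<and> j = k)"

primrec mpow :: "nat \<Rightarrow> f2mat \<Rightarrow> nat \<Rightarrow> f2mat" where
  "mpow q A 0 = mone q"
| "mpow q A (Suc e) = mmult q A (mpow q A e)"

definition downshift :: "nat \<Rightarrow> f2mat" where
  "downshift q = (\<lambda>j' j''. 2 \<le> j' \<and> j' = j'' + 1 \<and> j' \<le> q \<and> 1 \<le> j'')"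

text \<open>Messages are W_i in {0..<M_i} (a relabelling of {1..M_i}).  Local randomness
of transmitter i is a random variable Q_i with an arbitrary (countable) distribution P_i.
At time t (t = 0..N-1) transmitter 2 sends over the cooperative link a symbol
link t w2 q2 < 2^C (i.e. at most C bits), and the channel input
enc2 t w2 q2.  Transmitter 1's input at time t is enc1 t w1 q1 ls, where ls is the list of
link symbols received at times 0..t-1 (causality).\<close>

record code =
  M1 :: nat
  M2 :: nat
  P1 :: "nat pmf"
  P2 :: "nat pmf"
  enc1 :: "nat \<Rightarrow> nat \<Rightarrow> nat \<Rightarrow> nat list \<Rightarrow> f2vec"
  enc2 :: "nat \<Rightarrow> nat \<Rightarrow> nat \<Rightarrow> f2vec"
  link :: "nat \<Rightarrow> nat \<Rightarrow> nat \<Rightarrow> nat"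
  dec1 :: "f2vec list \<Rightarrow> nat"
  dec2 :: "f2vec list \<Rightarrow> nat"

definition src :: "code \<Rightarrow> (nat \<times> nat \<times> nat \<times> nat) pmf" where
  "src c = do {
     w1 \<leftarrow> pmf_of_set {..<M1 c};
     w2 \<leftarrow> pmf_of_set {..<M2 c};
     q1 \<leftarrow> P1 c;
     q2 \<leftarrow> P2 c;
     return_pmf (w1, w2, q1, q2) }"

definition W1v :: "nat \<times> nat \<times> nat \<times> nat \<Rightarrow> nat" where
  "W1v \<omega> = (case \<omega> of (w1, w2, q1, q2) \<Rightarrow> w1)"
definition W2v :: "nat \<times> nat \<times> nat \<times> nat \<Rightarrow> nat" where
  "W2v \<omega> = (case \<omega> of (w1, w2, q1, q2) \<Rightarrow> w2)"

definition x1 :: "code \<Rightarrow> nat \<times> nat \<times> nat \<times> nat \<Rightarrow> nat \<Rightarrow> f2vec" where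
  "x1 c \<omega> t = (case \<omega> of (w1, w2, q1, q2) \<Rightarrow>
       enc1 c t w1 q1 (map (\<lambda>s. link c s w2 q2) [0..<t]))"

definition x2 :: "code \<Rightarrow> nat \<times> nat \<times> nat \<times> nat \<Rightarrow> nat \<Rightarrow> f2vec" where
  "x2 c \<omega> t = (case \<omega> of (w1, w2, q1, q2) \<Rightarrow> enc2 c t w2 q2)"

definition Y1 :: "nat \<Rightarrow> nat \<Rightarrow> nat \<Rightarrow> code \<Rightarrow> nat \<times> nat \<times> nat \<times> nat \<Rightarrow> f2vec list" where
  "Y1 m n N c \<omega> = (let q = max m n in
     map (\<lambda>t. vadd (mvmult q (mpow q (downshift q) (q - m)) (x1 c \<omega> t))
                   (mvmult q (mpow q (downshift q) (q - n)) (x2 c \<omega> t))) [0..<N])"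

definition Y2 :: "nat \<Rightarrow> nat \<Rightarrow> nat \<Rightarrow> code \<Rightarrow> nat \<times> nat \<times> nat \<times> nat \<Rightarrow> f2vec list" where
  "Y2 m n N c \<omega> = (let q = max m n in
     map (\<lambda>t. mvmult q (mpow q (downshift q) (q - m)) (x2 c \<omega> t)) [0..<N])"

definition err_prob :: "nat \<Rightarrow> nat \<Rightarrow> nat \<Rightarrow> code \<Rightarrow> real" where
  "err_prob m n N c = measure_pmf.prob (src c)
     {\<omega>. dec1 c (Y1 m n N c \<omega>) \<noteq> W1v \<omega> \<or> dec2 c (Y2 m n N c \<omega>) \<noteq> W2v \<omega>}"

definition MI :: "code \<Rightarrow> (nat \<times> nat \<times> nat \<times> nat \<Rightarrow> 'a) \<Rightarrow> (nat \<times> nat \<times> nat \<times> nat \<Rightarrow> 'b) \<Rightarrow> real" where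
  "MI c X Y = prob_space.mutual_information (measure_pmf (src c)) 2
                 (count_space (range X)) (count_space (range Y)) X Y"

definition secure_code :: "nat \<Rightarrow> nat \<Rightarrow> nat \<Rightarrow> nat \<Rightarrow> real \<Rightarrow> real \<Rightarrow> code \<Rightarrow> bool" where
  "secure_code m n C N R1 R2 c \<longleftrightarrow>
     M1 c = nat \<lceil>2 powr (real N * R1)\<rceil> \<and>
     M2 c = nat \<lceil>2 powr (real N * R2)\<rceil> \<and>
     (\<forall>t w2 q2. link c t w2 q2 < 2 ^ C) \<and>
     MI c W1v (Y2 m n N c) = 0 \<and>
     MI c W2v (Y1 m n N c) = 0"

definition achievable :: "nat \<Rightarrow> nat \<Rightarrow> nat \<Rightarrow> real \<times> real \<Rightarrow> bool" where
  "achievable m n C R \<longleftrightarrow> 0 \<le> fst R \<and> 0 \<le> snd R \<and>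
     (\<exists>cs :: nat \<Rightarrow> code.
        (\<forall>N. secure_code m n C N (fst R) (snd R) (cs N)) \<and>
        (\<lambda>N. err_prob m n N (cs N)) \<longlonglongrightarrow> 0)"

definition secrecy_capacity_region :: "nat \<Rightarrow> nat \<Rightarrow> nat \<Rightarrow> (real \<times> real) set" where
  "secrecy_capacity_region m n C = closure {R. achievable m n C R}"

end

theory Submission
  imports Defs
begin


definition ent :: "'a pmf \<Rightarrow> real" where
  "ent p = (\<Sum>x\<in>set_pmf p. - (pmf p x * log 2 (pmf p x)))"

lemma pmf_map_sum:
  assumes "finite (set_pmf p)"
  shows "pmf (map_pmf f p) y = (\<Sum>x\<in>{x\<in>set_pmf p. f x = y}. pmf p x)"
proof -
  have "pmf (map_pmf f p) y = measure p (f -` {y} \<inter> set_pmf p)"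
    by (simp add: pmf_map measure_Int_set_pmf)
  also have "\<dots> = (\<Sum>x\<in>{x\<in>set_pmf p. f x = y}. pmf p x)"
    by (subst measure_measure_pmf_finite) (auto intro!: sum.cong simp: assms)
  finally show ?thesis .
qed

lemma sum_map_pmf:
  assumes "finite (set_pmf p)"
  shows "(\<Sum>y\<in>set_pmf (map_pmf f p). g y * pmf (map_pmf f p) y) = (\<Sum>x\<in>set_pmf p. g (f x) * pmf p x)"
proof -
  have "(\<Sum>x\<in>set_pmf p. g (f x) * pmf p x) = (\<Sum>y\<in>f ` set_pmf p. \<Sum>x\<in>{x\<in>set_pmf p. f x = y}. g (f x) * pmf p x)"
    by (rule sum.image_gen[OF assms])
  also have "\<dots> = (\<Sum>y\<in>f ` set_pmf p. g y * (\<Sum>x\<in>{x\<in>set_pmf p. f x = y}. pmf p x))"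
    by (intro sum.cong refl) (auto simp: sum_distrib_left)
  also have "\<dots> = (\<Sum>y\<in>set_pmf (map_pmf f p). g y * pmf (map_pmf f p) y)"
    by (simp add: pmf_map_sum[OF assms])
  finally show ?thesis by simp
qed

lemma ent_alt: "ent p = (\<Sum>x\<in>set_pmf p. pmf p x * (- log 2 (pmf p x)))"
  unfolding ent_def by simp

lemma ent_map:
  assumes "finite (set_pmf p)"
  shows "ent (map_pmf f p) = (\<Sum>x\<in>set_pmf p. pmf p x * (- log 2 (pmf (map_pmf f p) (f x))))"
  unfolding ent_alt using sum_map_pmf[OF assms, where f=f and g="\<lambda>y. - log 2 (pmf (map_pmf f p) y)"]
  by (simp add: mult.commute)

lemma gibbs:
  assumes fin: "finite (set_pmf p)"
    and pos: "\<And>s. s \<in> set_pmf p \<Longrightarrow> 0 < r s"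
    and le: "(\<Sum>s\<in>set_pmf p. pmf p s * r s) \<le> 1"
  shows "(\<Sum>s\<in>set_pmf p. pmf p s * log 2 (r s)) \<le> 0"
proof -
  have "(\<Sum>s\<in>set_pmf p. pmf p s * ln (r s)) \<le> (\<Sum>s\<in>set_pmf p. pmf p s * (r s - 1))"
    by (intro sum_mono mult_left_mono) (auto intro: ln_le_minus_one pos)
  also have "\<dots> = (\<Sum>s\<in>set_pmf p. pmf p s * r s) - (\<Sum>s\<in>set_pmf p. pmf p s)"
    by (simp add: algebra_simps sum_subtractf)
  also have "(\<Sum>s\<in>set_pmf p. pmf p s) = 1" by (rule sum_pmf_eq_1[OF fin]) simp
  finally have "(\<Sum>s\<in>set_pmf p. pmf p s * ln (r s)) \<le> 0" using le by simp
  then have "(\<Sum>s\<in>set_pmf p. pmf p s * ln (r s)) / ln 2 \<le> 0"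
    by (simp add: divide_nonpos_pos)
  then show ?thesis by (simp add: log_def sum_divide_distrib)
qed

lemma ent_nonneg: "finite (set_pmf p) \<Longrightarrow> 0 \<le> ent p"
  unfolding ent_alt
  by (intro sum_nonneg mult_nonneg_nonneg) (auto simp: pmf_le_1 pmf_positive)

lemma ent_le_card:
  assumes "finite A" "set_pmf p \<subseteq> A"
  shows "ent p \<le> log 2 (card A)"
proof -
  have fin: "finite (set_pmf p)" using assms finite_subset by blast
  have ne: "set_pmf p \<noteq> {}" by (rule set_pmf_not_empty)
  then have cA: "card A > 0" using assms card_gt_0_iff by blast
  define r where "r s = 1 / (real (card A) * pmf p s)" for s
  have "(\<Sum>s\<in>set_pmf p. pmf p s * log 2 (r s)) \<le> 0"
  proof (rule gibbs[OF fin])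
    show "0 < r s" if "s \<in> set_pmf p" for s using that cA by (simp add: r_def pmf_positive)
    have "(\<Sum>s\<in>set_pmf p. pmf p s * r s) = (\<Sum>s\<in>set_pmf p. 1 / real (card A))"
      by (intro sum.cong refl) (auto simp: r_def set_pmf_iff)
    also have "\<dots> = card (set_pmf p) / card A" by simp
    also have "\<dots> \<le> 1" using cA card_mono[OF assms] by simp
    finally show "(\<Sum>s\<in>set_pmf p. pmf p s * r s) \<le> 1" .
  qed
  moreover have "pmf p s * log 2 (r s) = pmf p s * (- log 2 (pmf p s)) - pmf p s * log 2 (card A)"
    if "s \<in> set_pmf p" for s
    using that cA by (simp add: r_def log_divide log_mult pmf_positive algebra_simps)
  ultimately have "(\<Sum>s\<in>set_pmf p. pmf p s * (- log 2 (pmf p s)) - pmf p s * log 2 (card A)) \<le> 0"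
    by (metis (no_types, lifting) sum.cong)
  then have "ent p - (\<Sum>s\<in>set_pmf p. pmf p s) * log 2 (card A) \<le> 0"
    by (simp add: sum_subtractf ent_alt sum_distrib_right)
  then show ?thesis using sum_pmf_eq_1[OF fin] by simp
qed

lemma ent_map_le:
  assumes fin: "finite (set_pmf p)"
  shows "ent (map_pmf f p) \<le> ent p"
proof -
  have "pmf p x * (- log 2 (pmf (map_pmf f p) (f x))) \<le> pmf p x * (- log 2 (pmf p x))"
    if "x \<in> set_pmf p" for x
  proof -
    have "pmf p x \<le> pmf (map_pmf f p) (f x)"
      unfolding pmf_map_sum[OF fin]
      by (rule member_le_sum) (use that fin in auto)
    then show ?thesis using that by (intro mult_left_mono) (auto simp: pmf_positive)
  qed
  then show ?thesis unfolding ent_map[OF fin] ent_alt[of p] by (rule sum_mono)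
qed

lemma ent_map_eq:
  assumes fin: "finite (set_pmf p)" and inv: "\<And>x. x \<in> set_pmf p \<Longrightarrow> g (f x) = x"
  shows "ent (map_pmf f p) = ent p"
proof -
  have "map_pmf g (map_pmf f p) = p" by (simp add: map_pmf_comp map_pmf_idI inv)
  then have "ent p \<le> ent (map_pmf f p)"
    using ent_map_le[of "map_pmf f p" g] fin by simp
  with ent_map_le[OF fin, of f] show ?thesis by simp
qed

lemma ent_map_eq2:
  assumes fin: "finite (set_pmf p)" and i1: "\<And>x. x \<in> set_pmf p \<Longrightarrow> g (f x) = h x"
    and i2: "\<And>x. x \<in> set_pmf p \<Longrightarrow> g' (h x) = f x"
  shows "ent (map_pmf f p) = ent (map_pmf h p)"
proof -
  have "map_pmf g (map_pmf f p) = map_pmf h p" by (simp add: map_pmf_comp i1 cong: map_pmf_cong)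
  moreover have "map_pmf g' (map_pmf h p) = map_pmf f p" by (simp add: map_pmf_comp i2 cong: map_pmf_cong)
  ultimately show ?thesis using ent_map_le[of "map_pmf f p" g] ent_map_le[of "map_pmf h p" g'] fin
    by fastforce
qed

lemma ent_pmf_of_set:
  assumes "finite S" "S \<noteq> {}"
  shows "ent (pmf_of_set S) = log 2 (card S)"
proof -
  have "ent (pmf_of_set S) = (\<Sum>x\<in>S. (1 / card S) * log 2 (card S))"
    unfolding ent_def using assms by (intro sum.cong) (auto simp: log_divide)
  then show ?thesis using assms by simp
qed

lemma ent_pair:
  assumes fp: "finite (set_pmf p)" and fq: "finite (set_pmf q)"
  shows "ent (pair_pmf p q) = ent p + ent q"
proof -
  have "ent (pair_pmf p q) = (\<Sum>x\<in>set_pmf p \<times> set_pmf q.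
           pmf p (fst x) * (- log 2 (pmf p (fst x))) * pmf q (snd x)) + (\<Sum>x\<in>set_pmf p \<times> set_pmf q. pmf p (fst x) * (pmf q (snd x) * (- log 2 (pmf q (snd x)))))"
    unfolding ent_alt sum.distrib[symmetric]
    by (intro sum.cong) (auto simp: pmf_pair log_mult pmf_positive algebra_simps)
  also have "(\<Sum>x\<in>set_pmf p \<times> set_pmf q. pmf p (fst x) * (- log 2 (pmf p (fst x))) * pmf q (snd x))
     = (\<Sum>a\<in>set_pmf p. \<Sum>b\<in>set_pmf q. pmf p a * (- log 2 (pmf p a)) * pmf q b)"
    by (simp add: sum.cartesian_product split_def)
  also have "\<dots> = (\<Sum>a\<in>set_pmf p. pmf p a * (- log 2 (pmf p a)) * (\<Sum>b\<in>set_pmf q. pmf q b))"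
    by (simp only: sum_distrib_left)
  also have "\<dots> = ent p"
    by (simp add: ent_alt sum_pmf_eq_1 fq)
  also have "(\<Sum>x\<in>set_pmf p \<times> set_pmf q. pmf p (fst x) * (pmf q (snd x) * (- log 2 (pmf q (snd x)))))
     = (\<Sum>a\<in>set_pmf p. \<Sum>b\<in>set_pmf q. pmf p a * (pmf q b * (- log 2 (pmf q b))))"
    by (simp add: sum.cartesian_product split_def)
  also have "\<dots> = (\<Sum>a\<in>set_pmf p. pmf p a * ent q)"
    by (simp only: sum_distrib_left ent_alt)
  also have "\<dots> = ent q"
    by (simp add: sum_distrib_right[symmetric] sum_pmf_eq_1 fp)
  finally show ?thesis .
qed


lemma marg_fst:
  assumes fin: "finite (set_pmf q)" and B: "finite B" "snd ` set_pmf q \<subseteq> B"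
  shows "(\<Sum>y\<in>B. pmf q (x, y)) = pmf (map_pmf fst q) x"
proof -
  have "(\<Sum>y\<in>B. pmf q (x, y)) = (\<Sum>t\<in>Pair x ` B. pmf q t)"
    by (subst sum.reindex) (auto simp: inj_on_def)
  also have "\<dots> = measure q (Pair x ` B)" using B by (simp add: measure_measure_pmf_finite)
  also have "\<dots> = measure q (Pair x ` B \<inter> set_pmf q)" by (simp add: measure_Int_set_pmf)
  also have "Pair x ` B \<inter> set_pmf q = fst -` {x} \<inter> set_pmf q" using B by force
  also have "measure q \<dots> = pmf (map_pmf fst q) x" by (simp add: measure_Int_set_pmf pmf_map)
  finally show ?thesis .
qed

lemma pmf_map_pos: "x \<in> set_pmf p \<Longrightarrow> 0 < pmf (map_pmf f p) (f x)"
  by (simp add: pmf_positive)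

lemma ent_ssa:
  fixes p :: "('a \<times> 'b \<times> 'c) pmf"
  assumes fin: "finite (set_pmf p)"
  shows "ent p + ent (map_pmf fst p) \<le>
     ent (map_pmf (\<lambda>(x,y,z). (x,y)) p) + ent (map_pmf (\<lambda>(x,y,z). (x,z)) p)"
proof -
  define S where "S = set_pmf p"
  define fxy where "fxy = (\<lambda>(x::'a,y::'b,z::'c). (x,y))"
  define fxz where "fxz = (\<lambda>(x::'a,y::'b,z::'c). (x,z))"
  define pX where "pX = pmf (map_pmf fst p)"
  define pXY where "pXY = pmf (map_pmf fxy p)"
  define pXZ where "pXZ = pmf (map_pmf fxz p)"
  define r where "r s = pXY (fxy s) * pXZ (fxz s) / (pmf p s * pX (fst s))" for s
  have pos: "0 < r s" if "s \<in> S" for s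
    using that unfolding r_def pX_def pXY_def pXZ_def S_def
    by (intro divide_pos_pos mult_pos_pos pmf_map_pos) (auto simp: pmf_positive)
  define X where "X = fst ` S"
  define Y where "Y = (\<lambda>(x,y,z). y) ` S"
  define Z where "Z = (\<lambda>(x,y,z). z) ` S"
  have finS: "finite S" using fin S_def by simp
  have fX: "finite X" "finite Y" "finite Z" using finS by (auto simp: X_def Y_def Z_def)
  have SXYZ: "S \<subseteq> X \<times> Y \<times> Z" unfolding X_def Y_def Z_def by force
  define F where "F = (\<lambda>(x,y,z). pXY (x,y) * pXZ (x,z) / pX x)"
  have Fnn: "0 \<le> F t" for t by (auto simp: F_def pX_def pXY_def pXZ_def split: prod.splits)
  have margY: "(\<Sum>y\<in>Y. pXY (x, y)) = pX x" for x
  proof -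
    have "(\<Sum>y\<in>Y. pXY (x, y)) = pmf (map_pmf fst (map_pmf fxy p)) x"
      unfolding pXY_def by (rule marg_fst) (use fin fX in \<open>force simp: fxy_def Y_def S_def\<close>)+
    also have "map_pmf fst (map_pmf fxy p) = map_pmf fst p"
      by (simp add: map_pmf_comp fxy_def split_def)
    finally show ?thesis by (simp add: pX_def)
  qed
  have margZ: "(\<Sum>z\<in>Z. pXZ (x, z)) = pX x" for x
  proof -
    have "(\<Sum>z\<in>Z. pXZ (x, z)) = pmf (map_pmf fst (map_pmf fxz p)) x"
      unfolding pXZ_def by (rule marg_fst) (use fin fX in \<open>force simp: fxz_def Z_def S_def\<close>)+
    also have "map_pmf fst (map_pmf fxz p) = map_pmf fst p"
      by (simp add: map_pmf_comp fxz_def split_def)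
    finally show ?thesis by (simp add: pX_def)
  qed
  have "(\<Sum>s\<in>S. pmf p s * r s) = (\<Sum>s\<in>S. F s)"
    by (intro sum.cong refl) (auto simp: r_def F_def fxy_def fxz_def S_def set_pmf_iff)
  also have "\<dots> \<le> (\<Sum>s\<in>X \<times> Y \<times> Z. F s)"
    by (rule sum_mono2) (use fX SXYZ Fnn in auto)
  also have "\<dots> = (\<Sum>x\<in>X. \<Sum>y\<in>Y. \<Sum>z\<in>Z. pXY (x,y) * pXZ (x,z) / pX x)"
    by (simp add: sum.cartesian_product F_def)
  also have "\<dots> = (\<Sum>x\<in>X. (\<Sum>y\<in>Y. pXY (x,y)) * (\<Sum>z\<in>Z. pXZ (x,z)) / pX x)"
    by (intro sum.cong refl) (simp add: sum_product sum_divide_distrib)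
  also have "\<dots> = (\<Sum>x\<in>X. pX x)"
  proof (intro sum.cong refl)
    fix x assume "x \<in> X"
    then have "0 < pX x" unfolding X_def pX_def S_def by (auto intro: pmf_map_pos)
    then show "(\<Sum>y\<in>Y. pXY (x,y)) * (\<Sum>z\<in>Z. pXZ (x,z)) / pX x = pX x"
      by (simp add: margY margZ)
  qed
  also have "\<dots> = 1" unfolding pX_def X_def S_def
    by (rule sum_pmf_eq_1) (use fin in auto)
  finally have "(\<Sum>s\<in>S. pmf p s * log 2 (r s)) \<le> 0"
    using gibbs[OF fin, of r] pos S_def by simp
  moreover have "pmf p s * log 2 (r s) = pmf p s * (- log 2 (pmf p s)) + pmf p s * (- log 2 (pX (fst s)))
       - pmf p s * (- log 2 (pXY (fxy s))) - pmf p s * (- log 2 (pXZ (fxz s)))" if "s \<in> S" for s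
  proof -
    have "0 < pXY (fxy s)" "0 < pXZ (fxz s)" "0 < pX (fst s)" "0 < pmf p s"
      using that unfolding pX_def pXY_def pXZ_def S_def by (auto intro: pmf_map_pos simp: pmf_positive)
    then show ?thesis unfolding r_def by (simp add: log_mult log_divide algebra_simps)
  qed
  ultimately have "(\<Sum>s\<in>S. pmf p s * (- log 2 (pmf p s)) + pmf p s * (- log 2 (pX (fst s)))
       - pmf p s * (- log 2 (pXY (fxy s))) - pmf p s * (- log 2 (pXZ (fxz s)))) \<le> 0"
    by (metis (no_types, lifting) sum.cong)
  then show ?thesis
    unfolding ent_map[OF fin] ent_alt[of p] S_def[symmetric]
    by (auto simp: sum.distrib sum_subtractf pX_def pXY_def pXZ_def fxy_def fxz_def sum_negf)
qed

lemma ent_subadd: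
  fixes p :: "('a \<times> 'b) pmf"
  assumes fin: "finite (set_pmf p)"
  shows "ent p \<le> ent (map_pmf fst p) + ent (map_pmf snd p)"
proof -
  define p' where "p' = map_pmf (\<lambda>(x,y). ((),x,y)) p"
  have fin': "finite (set_pmf p')" using fin by (simp add: p'_def)
  have "ent p' + ent (map_pmf fst p') \<le>
     ent (map_pmf (\<lambda>(x,y,z). (x,y)) p') + ent (map_pmf (\<lambda>(x,y,z). (x,z)) p')"
    by (rule ent_ssa[OF fin'])
  moreover have "ent p' = ent p" unfolding p'_def
    by (rule ent_map_eq[OF fin, where g="\<lambda>(u,x,y). (x,y)"]) auto
  moreover have "map_pmf fst p' = return_pmf ()"
    by (simp add: p'_def map_pmf_comp split_def map_pmf_const)
  moreover have "ent (return_pmf ()) = 0" by (simp add: ent_def)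
  moreover have "ent (map_pmf (\<lambda>(x,y,z). (x,y)) p') = ent (map_pmf fst p)"
    unfolding p'_def map_pmf_comp
    by (rule ent_map_eq2[where g=snd and g'="\<lambda>x. ((),x)"]) (use fin in auto)
  moreover have "ent (map_pmf (\<lambda>(x,y,z). (x,z)) p') = ent (map_pmf snd p)"
    unfolding p'_def map_pmf_comp
    by (rule ent_map_eq2[where g=snd and g'="\<lambda>x. ((),x)"]) (use fin in auto)
  ultimately show ?thesis by simp
qed

lemma ent_fano:
  fixes p :: "('w \<times> 'y) pmf" and g :: "'y \<Rightarrow> 'w"
  assumes fin: "finite (set_pmf p)" and W: "finite W" "fst ` set_pmf p \<subseteq> W" "card W = M"
  shows "ent p - ent (map_pmf snd p) \<le> 1 + measure p {s. g (snd s) \<noteq> fst s} * log 2 M"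
proof -
  define S where "S = set_pmf p"
  have finS: "finite S" using fin S_def by simp
  have M0: "M > 0" using W set_pmf_not_empty[of p] by (auto simp: card_gt_0_iff)
  define pY where "pY = pmf (map_pmf snd p)"
  define \<rho> where "\<rho> s = (if g (snd s) = fst s then 1/2 else 1 / (2 * real M))" for s
  define r where "r s = pY (snd s) * \<rho> s / pmf p s" for s
  have pos: "0 < r s" if "s \<in> S" for s
    using that M0 unfolding r_def pY_def S_def \<rho>_def
    by (intro divide_pos_pos mult_pos_pos pmf_map_pos) (auto simp: pmf_positive)
  define Y where "Y = snd ` S"
  have fY: "finite Y" using finS Y_def by simp
  have SWY: "S \<subseteq> W \<times> Y" using W unfolding S_def Y_def by force
  have rho_sum: "(\<Sum>w\<in>W. \<rho> (w, y)) \<le> 1" for y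
  proof -
    have d: "(\<Sum>w\<in>W. (if w = g y then 1/2 else 0::real)) \<le> 1/2"
      by (subst sum.delta[OF W(1)]) auto
    have "(\<Sum>w\<in>W. \<rho> (w, y)) \<le> (\<Sum>w\<in>W. 1 / (2 * real M) + (if w = g y then 1/2 else 0))"
      by (intro sum_mono) (auto simp: \<rho>_def)
    also have "\<dots> = card W / (2 * real M) + (\<Sum>w\<in>W. (if w = g y then 1/2 else 0))"
      by (simp add: sum.distrib)
    also have "\<dots> \<le> 1" using W M0 d by auto
    finally show ?thesis .
  qed
  have "(\<Sum>s\<in>S. pmf p s * r s) = (\<Sum>s\<in>S. pY (snd s) * \<rho> s)"
    by (intro sum.cong refl) (auto simp: r_def S_def set_pmf_iff)
  also have "\<dots> \<le> (\<Sum>s\<in>W \<times> Y. pY (snd s) * \<rho> s)"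
    by (rule sum_mono2) (use fY W SWY in \<open>auto simp: pY_def \<rho>_def\<close>)
  also have "\<dots> = (\<Sum>w\<in>W. \<Sum>y\<in>Y. pY y * \<rho> (w,y))"
    by (simp add: sum.cartesian_product split_def)
  also have "\<dots> = (\<Sum>y\<in>Y. pY y * (\<Sum>w\<in>W. \<rho> (w,y)))"
    by (subst sum.swap) (simp add: sum_distrib_left)
  also have "\<dots> \<le> (\<Sum>y\<in>Y. pY y)"
    by (intro sum_mono) (use rho_sum in \<open>auto simp: pY_def intro: mult_left_le\<close>)
  also have "\<dots> = 1" unfolding pY_def Y_def S_def
    by (rule sum_pmf_eq_1) (use fin in auto)
  finally have "(\<Sum>s\<in>S. pmf p s * log 2 (r s)) \<le> 0"
    using gibbs[OF fin, of r] pos S_def by simp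
  moreover have "pmf p s * log 2 (r s) = pmf p s * (- log 2 (pmf p s)) - pmf p s * (- log 2 (pY (snd s)))
        - pmf p s * (- log 2 (\<rho> s))" if "s \<in> S" for s
  proof -
    have "0 < pY (snd s)" "0 < pmf p s" "0 < \<rho> s"
      using that M0 unfolding pY_def S_def \<rho>_def by (auto intro: pmf_map_pos simp: pmf_positive)
    then show ?thesis unfolding r_def by (simp add: log_mult log_divide algebra_simps)
  qed
  ultimately have A: "ent p - ent (map_pmf snd p) - (\<Sum>s\<in>S. pmf p s * (- log 2 (\<rho> s))) \<le> 0"
    unfolding ent_map[OF fin] ent_alt[of p] S_def[symmetric] pY_def[symmetric]
    by (auto simp: sum_subtractf sum.distrib sum_negf cong: sum.cong)
  have "(\<Sum>s\<in>S. pmf p s * (- log 2 (\<rho> s))) = (\<Sum>s\<in>S. pmf p s * 1 + pmf p s * (if g (snd s) \<noteq> fst s then log 2 M else 0))"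
    using M0 by (intro sum.cong refl) (auto simp: \<rho>_def log_divide log_mult algebra_simps)
  also have "\<dots> = (\<Sum>s\<in>S. pmf p s) + (\<Sum>s\<in>S. pmf p s * (if g (snd s) \<noteq> fst s then log 2 M else 0))"
    by (simp add: sum.distrib)
  also have "(\<Sum>s\<in>S. pmf p s) = 1" using sum_pmf_eq_1[OF fin] S_def by simp
  also have "(\<Sum>s\<in>S. pmf p s * (if g (snd s) \<noteq> fst s then log 2 M else 0)) =
      (\<Sum>s\<in>{s\<in>S. g (snd s) \<noteq> fst s}. pmf p s) * log 2 M"
    by (unfold sum.inter_filter[OF finS] sum_distrib_right) (auto intro!: sum.cong)
  also have "(\<Sum>s\<in>{s\<in>S. g (snd s) \<noteq> fst s}. pmf p s) = measure p {s. g (snd s) \<noteq> fst s}"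
  proof -
    have "{s\<in>S. g (snd s) \<noteq> fst s} = {s. g (snd s) \<noteq> fst s} \<inter> set_pmf p" by (auto simp: S_def)
    moreover have "finite ({s. g (snd s) \<noteq> fst s} \<inter> set_pmf p)" using fin by simp
    ultimately show ?thesis
      by (metis measure_measure_pmf_finite measure_Int_set_pmf)
  qed
  finally show ?thesis using A by simp
qed



lemma emeasure_distr_pmf_single:
  fixes \<mu> :: "'o pmf"
  assumes "a \<in> A" "\<And>x. X x \<in> A"
  shows "emeasure (distr (measure_pmf \<mu>) (count_space A) X) {a} = ennreal (pmf (map_pmf X \<mu>) a)"
  using assms by (subst emeasure_distr) (auto simp: pmf_map measure_pmf.emeasure_eq_measure vimage_def)

lemma distr_pair_eq_iff:
  fixes \<mu> :: "'o pmf" and X :: "'o \<Rightarrow> 'a" and Y :: "'o \<Rightarrow> 'b"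
  assumes cA: "countable (range X)" and cB: "countable (range Y)"
  defines "P \<equiv> distr (measure_pmf \<mu>) (count_space (range X)) X \<Otimes>\<^sub>M distr (measure_pmf \<mu>) (count_space (range Y)) Y"
  defines "Q \<equiv> distr (measure_pmf \<mu>) (count_space (range X) \<Otimes>\<^sub>M count_space (range Y)) (\<lambda>\<omega>. (X \<omega>, Y \<omega>))"
  shows "P = Q \<longleftrightarrow> map_pmf (\<lambda>\<omega>. (X \<omega>, Y \<omega>)) \<mu> = pair_pmf (map_pmf X \<mu>) (map_pmf Y \<mu>)"
proof -
  interpret DX: prob_space "distr (measure_pmf \<mu>) (count_space (range X)) X"
    by (rule measure_pmf.prob_space_distr) simp
  interpret DY: prob_space "distr (measure_pmf \<mu>) (count_space (range Y)) Y"
    by (rule measure_pmf.prob_space_distr) simp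
  interpret DXY: pair_prob_space "distr (measure_pmf \<mu>) (count_space (range X)) X" "distr (measure_pmf \<mu>) (count_space (range Y)) Y"
    by standard
  have "sets P = sets (count_space (range X) \<Otimes>\<^sub>M count_space (range Y))"
    unfolding P_def by (rule sets_pair_measure_cong) simp_all
  then have sP: "sets P = Pow (range X \<times> range Y)" unfolding pair_measure_countable[OF cA cB] by simp
  have sQ: "sets Q = Pow (range X \<times> range Y)"
    unfolding Q_def by (simp add: pair_measure_countable[OF cA cB])
  have eP: "emeasure P {(a,b)} = ennreal (pmf (map_pmf X \<mu>) a * pmf (map_pmf Y \<mu>) b)"
    if "a \<in> range X" "b \<in> range Y" for a b
  proof -
    have "emeasure P ({a} \<times> {b}) = emeasure (distr (measure_pmf \<mu>) (count_space (range X)) X) {a} *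
        emeasure (distr (measure_pmf \<mu>) (count_space (range Y)) Y) {b}"
      unfolding P_def using that by (intro DY.emeasure_pair_measure_Times) auto
    then show ?thesis using that by (simp add: emeasure_distr_pmf_single ennreal_mult)
  qed
  have eQ: "emeasure Q {(a,b)} = ennreal (pmf (map_pmf (\<lambda>\<omega>. (X \<omega>, Y \<omega>)) \<mu>) (a,b))"
    if "a \<in> range X" "b \<in> range Y" for a b
  proof -
    have "emeasure Q {(a,b)} = emeasure (distr (measure_pmf \<mu>) (count_space (range X \<times> range Y)) (\<lambda>\<omega>. (X \<omega>, Y \<omega>))) {(a,b)}"
      unfolding Q_def pair_measure_countable[OF cA cB] ..
    also have "\<dots> = ennreal (pmf (map_pmf (\<lambda>\<omega>. (X \<omega>, Y \<omega>)) \<mu>) (a,b))"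
      using that by (intro emeasure_distr_pmf_single) auto
    finally show ?thesis .
  qed
  have pe: "pmf (map_pmf (\<lambda>\<omega>. (X \<omega>, Y \<omega>)) \<mu>) (a,b) = pmf (pair_pmf (map_pmf X \<mu>) (map_pmf Y \<mu>)) (a,b)"
    if "a \<notin> range X \<or> b \<notin> range Y" for a b
  proof -
    have "(a,b) \<notin> (\<lambda>\<omega>. (X \<omega>, Y \<omega>)) ` set_pmf \<mu>" "a \<notin> X ` set_pmf \<mu> \<or> b \<notin> Y ` set_pmf \<mu>"
      using that by auto
    then show ?thesis by (auto simp: pmf_pair pmf_map_outside)
  qed
  show ?thesis
  proof
    assume "P = Q"
    show "map_pmf (\<lambda>\<omega>. (X \<omega>, Y \<omega>)) \<mu> = pair_pmf (map_pmf X \<mu>) (map_pmf Y \<mu>)"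
    proof (rule pmf_eqI)
      fix i :: "'a \<times> 'b"
      obtain a b where i: "i = (a,b)" by force
      show "pmf (map_pmf (\<lambda>\<omega>. (X \<omega>, Y \<omega>)) \<mu>) i = pmf (pair_pmf (map_pmf X \<mu>) (map_pmf Y \<mu>)) i"
      proof (cases "a \<in> range X \<and> b \<in> range Y")
        case True
        then show ?thesis using eP[of a b] eQ[of a b] \<open>P = Q\<close> by (simp add: i pmf_pair)
      qed (use pe i in auto)
    qed
  next
    assume eq: "map_pmf (\<lambda>\<omega>. (X \<omega>, Y \<omega>)) \<mu> = pair_pmf (map_pmf X \<mu>) (map_pmf Y \<mu>)"
    show "P = Q"
      by (rule measure_eqI_countable[OF sP sQ]) (use cA cB eP eQ eq in \<open>auto simp: pmf_pair\<close>)
  qed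
qed

lemma mi_zero_iff:
  fixes \<mu> :: "'o pmf" and X :: "'o \<Rightarrow> 'a" and Y :: "'o \<Rightarrow> 'b"
  assumes cA: "countable (range X)" and cB: "countable (range Y)"
    and fin: "finite ((\<lambda>\<omega>. (X \<omega>, Y \<omega>)) ` set_pmf \<mu>)"
  shows "prob_space.mutual_information (measure_pmf \<mu>) 2 (count_space (range X)) (count_space (range Y)) X Y = 0
     \<longleftrightarrow> map_pmf (\<lambda>\<omega>. (X \<omega>, Y \<omega>)) \<mu> = pair_pmf (map_pmf X \<mu>) (map_pmf Y \<mu>)"
proof -
  define P where "P = distr (measure_pmf \<mu>) (count_space (range X)) X \<Otimes>\<^sub>M distr (measure_pmf \<mu>) (count_space (range Y)) Y"
  define Q where "Q = distr (measure_pmf \<mu>) (count_space (range X) \<Otimes>\<^sub>M count_space (range Y)) (\<lambda>\<omega>. (X \<omega>, Y \<omega>))"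
  have MIdef: "prob_space.mutual_information (measure_pmf \<mu>) 2 (count_space (range X)) (count_space (range Y)) X Y
     = KL_divergence 2 P Q"
    unfolding prob_space.mutual_information_def[OF prob_space_measure_pmf] P_def Q_def ..
  interpret DX: prob_space "distr (measure_pmf \<mu>) (count_space (range X)) X"
    by (rule measure_pmf.prob_space_distr) simp
  interpret DY: prob_space "distr (measure_pmf \<mu>) (count_space (range Y)) Y"
    by (rule measure_pmf.prob_space_distr) simp
  have pP: "prob_space P" unfolding P_def by (intro prob_space_pair) unfold_locales
  interpret PI: information_space P 2 by (rule information_space.intro[OF pP]) (unfold_locales, simp)
  have pQ: "prob_space Q" unfolding Q_def by (rule measure_pmf.prob_space_distr) (simp add: space_pair_measure)
  have "sets P = sets (count_space (range X) \<Otimes>\<^sub>M count_space (range Y))"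
    unfolding P_def by (rule sets_pair_measure_cong) simp_all
  then have sP: "sets P = Pow (range X \<times> range Y)" unfolding pair_measure_countable[OF cA cB] by simp
  have sQ: "sets Q = Pow (range X \<times> range Y)"
    unfolding Q_def by (simp add: pair_measure_countable[OF cA cB])
  have ac: "absolutely_continuous P Q"
    unfolding absolutely_continuous_def
  proof
    fix E assume E: "E \<in> null_sets P"
    then have Esub: "E \<subseteq> range X \<times> range Y" using sP null_setsD2 by blast
    have "set_pmf \<mu> \<inter> (\<lambda>\<omega>. (X \<omega>, Y \<omega>)) -` E = {}"
    proof (rule ccontr)
      assume "set_pmf \<mu> \<inter> (\<lambda>\<omega>. (X \<omega>, Y \<omega>)) -` E \<noteq> {}"
      then obtain \<omega> where \<omega>: "\<omega> \<in> set_pmf \<mu>" "(X \<omega>, Y \<omega>) \<in> E" by auto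
      have "emeasure P {(X \<omega>, Y \<omega>)} \<le> emeasure P E"
        by (rule emeasure_mono) (use \<omega> E Esub in \<open>auto simp: sP\<close>)
      also have "\<dots> = 0" using E by auto
      finally have "emeasure P ({X \<omega>} \<times> {Y \<omega>}) = 0" by simp
      moreover have "emeasure P ({X \<omega>} \<times> {Y \<omega>}) = emeasure (distr (measure_pmf \<mu>) (count_space (range X)) X) {X \<omega>} *
        emeasure (distr (measure_pmf \<mu>) (count_space (range Y)) Y) {Y \<omega>}"
        unfolding P_def by (intro DY.emeasure_pair_measure_Times) auto
      ultimately have "pmf (map_pmf X \<mu>) (X \<omega>) * pmf (map_pmf Y \<mu>) (Y \<omega>) = 0"
        by (simp add: emeasure_distr_pmf_single ennreal_mult[symmetric])
      moreover have "0 < pmf (map_pmf X \<mu>) (X \<omega>)" "0 < pmf (map_pmf Y \<mu>) (Y \<omega>)"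
        using \<omega> by (auto intro: pmf_map_pos)
      ultimately show False by simp
    qed
    then have "measure \<mu> ((\<lambda>\<omega>. (X \<omega>, Y \<omega>)) -` E) = 0" by (simp add: measure_pmf_zero_iff)
    have Esets: "E \<in> sets (count_space (range X) \<Otimes>\<^sub>M count_space (range Y))"
      unfolding pair_measure_countable[OF cA cB] using Esub by simp
    have "emeasure Q E = 0"
      unfolding Q_def using Esets \<open>measure \<mu> ((\<lambda>\<omega>. (X \<omega>, Y \<omega>)) -` E) = 0\<close>
      by (subst emeasure_distr) (auto simp: measure_pmf.emeasure_eq_measure space_pair_measure)
    moreover have "E \<in> sets Q" using Esub by (simp add: sQ)
    ultimately show "E \<in> null_sets Q" by auto
  qed
  have integ: "integrable Q (entropy_density 2 P Q)"
  proof -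
    define f where "f = entropy_density 2 P Q"
    have meas: "f \<in> borel_measurable (count_space (range X) \<Otimes>\<^sub>M count_space (range Y))"
      by (simp add: pair_measure_countable[OF cA cB])
    have "integrable (measure_pmf \<mu>) (\<lambda>\<omega>. f (X \<omega>, Y \<omega>))"
    proof (rule measure_pmf.integrable_const_bound[where B="Max ((\<lambda>\<omega>. norm (f (X \<omega>, Y \<omega>))) ` set_pmf \<mu>)"])
      have fin2: "finite ((\<lambda>\<omega>. norm (f (X \<omega>, Y \<omega>))) ` set_pmf \<mu>)"
        using finite_imageI[OF fin, of "\<lambda>p. norm (f p)"] by (simp add: image_image)
      show "AE x in measure_pmf \<mu>. norm (f (X x, Y x)) \<le> Max ((\<lambda>\<omega>. norm (f (X \<omega>, Y \<omega>))) ` set_pmf \<mu>)"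
        unfolding AE_measure_pmf_iff using fin2 by (auto intro: Max_ge)
    qed simp
    then have "integrable Q f" unfolding Q_def
      by (subst integrable_distr_eq) (use meas in \<open>auto simp: space_pair_measure\<close>)
    then show ?thesis by (simp add: f_def)
  qed
  have "KL_divergence 2 P Q = 0 \<longleftrightarrow> Q = P"
    by (rule PI.KL_eq_0_iff_eq_ac[OF pQ ac _ integ]) (simp add: sP sQ)
  then have "prob_space.mutual_information (measure_pmf \<mu>) 2 (count_space (range X)) (count_space (range Y)) X Y = 0 \<longleftrightarrow> P = Q"
    unfolding MIdef by auto
  then show ?thesis using distr_pair_eq_iff[OF cA cB, of \<mu>] unfolding P_def Q_def by simp
qed



definition H :: "'o pmf \<Rightarrow> ('o \<Rightarrow> 'a) \<Rightarrow> real" where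
  "H \<mu> X = ent (map_pmf X \<mu>)"

lemma H_nonneg: "finite (X ` set_pmf \<mu>) \<Longrightarrow> 0 \<le> H \<mu> X"
  unfolding H_def by (rule ent_nonneg) simp

lemma H_mono:
  assumes "finite (X ` set_pmf \<mu>)" "\<And>\<omega>. \<omega> \<in> set_pmf \<mu> \<Longrightarrow> Y \<omega> = f (X \<omega>)"
  shows "H \<mu> Y \<le> H \<mu> X"
proof -
  have "map_pmf Y \<mu> = map_pmf f (map_pmf X \<mu>)"
    by (simp add: map_pmf_comp assms(2) cong: map_pmf_cong)
  then show ?thesis unfolding H_def using ent_map_le[of "map_pmf X \<mu>" f] assms(1) by simp
qed

lemma H_eq:
  assumes "finite (X ` set_pmf \<mu>)" "\<And>\<omega>. \<omega> \<in> set_pmf \<mu> \<Longrightarrow> Y \<omega> = f (X \<omega>)"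
    "\<And>\<omega>. \<omega> \<in> set_pmf \<mu> \<Longrightarrow> X \<omega> = g (Y \<omega>)"
  shows "H \<mu> Y = H \<mu> X"
proof -
  have finY: "finite (Y ` set_pmf \<mu>)"
  proof -
    have "Y ` set_pmf \<mu> = f ` X ` set_pmf \<mu>" using assms(2) by force
    then show ?thesis using assms(1) by simp
  qed
  have "H \<mu> Y \<le> H \<mu> X" using H_mono[of X \<mu> Y f] assms(1,2) by blast
  moreover have "H \<mu> X \<le> H \<mu> Y" using H_mono[of Y \<mu> X g] finY assms(3) by blast
  ultimately show ?thesis by linarith
qed

lemma H_card:
  assumes "finite A" "\<And>\<omega>. \<omega> \<in> set_pmf \<mu> \<Longrightarrow> X \<omega> \<in> A"
  shows "H \<mu> X \<le> log 2 (card A)"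
  unfolding H_def by (rule ent_le_card) (use assms in auto)

lemma H_subadd:
  assumes "finite ((\<lambda>\<omega>. (X \<omega>, Y \<omega>)) ` set_pmf \<mu>)"
  shows "H \<mu> (\<lambda>\<omega>. (X \<omega>, Y \<omega>)) \<le> H \<mu> X + H \<mu> Y"
  using ent_subadd[of "map_pmf (\<lambda>\<omega>. (X \<omega>, Y \<omega>)) \<mu>"] assms
  by (simp add: H_def map_pmf_comp)

lemma H_ssa:
  assumes "finite ((\<lambda>\<omega>. (X \<omega>, Y \<omega>, Z \<omega>)) ` set_pmf \<mu>)"
  shows "H \<mu> (\<lambda>\<omega>. (X \<omega>, Y \<omega>, Z \<omega>)) + H \<mu> X \<le> H \<mu> (\<lambda>\<omega>. (X \<omega>, Y \<omega>)) + H \<mu> (\<lambda>\<omega>. (X \<omega>, Z \<omega>))"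
  using ent_ssa[of "map_pmf (\<lambda>\<omega>. (X \<omega>, Y \<omega>, Z \<omega>)) \<mu>"] assms
  by (simp add: H_def map_pmf_comp)

lemma H_indep:
  assumes "finite (X ` set_pmf \<mu>)" "finite (Y ` set_pmf \<mu>)"
    and "map_pmf (\<lambda>\<omega>. (X \<omega>, Y \<omega>)) \<mu> = pair_pmf (map_pmf X \<mu>) (map_pmf Y \<mu>)"
  shows "H \<mu> (\<lambda>\<omega>. (X \<omega>, Y \<omega>)) = H \<mu> X + H \<mu> Y"
  unfolding H_def assms(3) by (rule ent_pair) (use assms in auto)

lemma H_fano:
  assumes "finite ((\<lambda>\<omega>. (W \<omega>, Y \<omega>)) ` set_pmf \<mu>)" "finite A" "card A = M"
    "\<And>\<omega>. \<omega> \<in> set_pmf \<mu> \<Longrightarrow> W \<omega> \<in> A"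
  shows "H \<mu> (\<lambda>\<omega>. (W \<omega>, Y \<omega>)) - H \<mu> Y \<le> 1 + measure \<mu> {\<omega>. g (Y \<omega>) \<noteq> W \<omega>} * log 2 M"
proof -
  have "ent (map_pmf (\<lambda>\<omega>. (W \<omega>, Y \<omega>)) \<mu>) - ent (map_pmf snd (map_pmf (\<lambda>\<omega>. (W \<omega>, Y \<omega>)) \<mu>))
     \<le> 1 + measure (map_pmf (\<lambda>\<omega>. (W \<omega>, Y \<omega>)) \<mu>) {s. g (snd s) \<noteq> fst s} * log 2 M"
    by (rule ent_fano) (use assms in \<open>auto simp: image_image\<close>)
  moreover have "measure (map_pmf (\<lambda>\<omega>. (W \<omega>, Y \<omega>)) \<mu>) {s. g (snd s) \<noteq> fst s} = measure \<mu> {\<omega>. g (Y \<omega>) \<noteq> W \<omega>}"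
    by (simp add: measure_map_pmf vimage_def)
  ultimately show ?thesis by (simp add: H_def map_pmf_comp)
qed

lemma finite_pair_img:
  "finite (X ` S) \<Longrightarrow> finite (Y ` S) \<Longrightarrow> finite ((\<lambda>\<omega>. (X \<omega>, Y \<omega>)) ` S)"
  by (rule finite_subset[of _ "X ` S \<times> Y ` S"]) auto



lemma mpow_downshift:
  "mpow q (downshift q) k = (\<lambda>j l. 1 \<le> l \<and> j = l + k \<and> j \<le> q)"
proof (induction k)
  case 0
  then show ?case by (auto simp: mone_def fun_eq_iff)
next
  case (Suc k)
  show ?case
  proof (intro ext)
    fix j l
    have "{i \<in> {1..q}. downshift q j i \<and> mpow q (downshift q) k i l} =
          (if 2 \<le> j \<and> j \<le> q \<and> 1 \<le> l \<and> j = l + k + 1 then {j - 1} else {})"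
      unfolding Suc.IH by (auto simp: downshift_def)
    then show "mpow q (downshift q) (Suc k) j l = (1 \<le> l \<and> j = l + Suc k \<and> j \<le> q)"
      by (auto simp: mmult_def)
  qed
qed

lemma mvmult_downshift:
  "mvmult q (mpow q (downshift q) k) x j = (1 \<le> j \<and> j \<le> q \<and> k + 1 \<le> j \<and> x (j - k))"
proof -
  have "{l \<in> {1..q}. mpow q (downshift q) k j l \<and> x l} =
        (if 1 \<le> j \<and> j \<le> q \<and> k + 1 \<le> j \<and> x (j - k) then {j - k} else {})"
    unfolding mpow_downshift by auto
  then show ?thesis by (auto simp: mvmult_def)
qed

lemma map_fst_pair': "map_pmf (\<lambda>x. f (fst x)) (pair_pmf A B) = map_pmf f A"
proof -
  have "map_pmf (\<lambda>x. f (fst x)) (pair_pmf A B) = map_pmf f (map_pmf fst (pair_pmf A B))"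
    by (simp add: map_pmf_comp)
  then show ?thesis by (simp add: map_fst_pair_pmf)
qed

lemma map_snd_pair': "map_pmf (\<lambda>x. f (snd x)) (pair_pmf A B) = map_pmf f B"
proof -
  have "map_pmf (\<lambda>x. f (snd x)) (pair_pmf A B) = map_pmf f (map_pmf snd (pair_pmf A B))"
    by (simp add: map_pmf_comp)
  then show ?thesis by (simp add: map_snd_pair_pmf)
qed

lemma src_decomp:
  "src c = map_pmf (\<lambda>((w1,q1),(w2,q2)). (w1,w2,q1,q2))
     (pair_pmf (pair_pmf (pmf_of_set {..<M1 c}) (P1 c)) (pair_pmf (pmf_of_set {..<M2 c}) (P2 c)))"
proof -
  have "src c = bind_pmf (pmf_of_set {..<M1 c}) (\<lambda>w1. bind_pmf (P1 c) (\<lambda>q1.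
      bind_pmf (pmf_of_set {..<M2 c}) (\<lambda>w2. bind_pmf (P2 c) (\<lambda>q2. return_pmf (w1,w2,q1,q2)))))"
    unfolding src_def
    by (rule bind_pmf_cong[OF refl], rule bind_commute_pmf)
  then show ?thesis
    by (simp add: pair_pmf_def map_bind_pmf bind_assoc_pmf bind_return_pmf map_return_pmf)
qed

lemma src_indep:
  fixes F :: "nat \<times> nat \<Rightarrow> 'a" and G :: "nat \<times> nat \<Rightarrow> 'b"
  shows "map_pmf (\<lambda>\<omega>. (F (fst \<omega>, fst (snd (snd \<omega>))), G (fst (snd \<omega>), snd (snd (snd \<omega>))))) (src c) =
    pair_pmf (map_pmf (\<lambda>\<omega>. F (fst \<omega>, fst (snd (snd \<omega>)))) (src c))
             (map_pmf (\<lambda>\<omega>. G (fst (snd \<omega>), snd (snd (snd \<omega>)))) (src c))"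
proof -
  define A where "A = pair_pmf (pmf_of_set {..<M1 c}) (P1 c)"
  define B where "B = pair_pmf (pmf_of_set {..<M2 c}) (P2 c)"
  have "map_pmf (\<lambda>\<omega>. (F (fst \<omega>, fst (snd (snd \<omega>))), G (fst (snd \<omega>), snd (snd (snd \<omega>))))) (src c)
      = map_pmf (\<lambda>(a,b). (F a, G b)) (pair_pmf A B)"
    unfolding src_decomp A_def B_def map_pmf_comp by (simp add: split_def)
  also have "\<dots> = pair_pmf (map_pmf F A) (map_pmf G B)" by (rule map_pair)
  also have "map_pmf F A = map_pmf (\<lambda>\<omega>. F (fst \<omega>, fst (snd (snd \<omega>)))) (src c)"
    unfolding src_decomp A_def B_def map_pmf_comp
    by (simp add: split_def map_fst_pair')
  also have "map_pmf G B = map_pmf (\<lambda>\<omega>. G (fst (snd \<omega>), snd (snd (snd \<omega>)))) (src c)"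
    unfolding src_decomp A_def B_def map_pmf_comp
    by (simp add: split_def map_snd_pair')
  finally show ?thesis .
qed

lemma set_src:
  assumes "M1 c > 0" "M2 c > 0" "\<omega> \<in> set_pmf (src c)"
  shows "W1v \<omega> < M1 c" "W2v \<omega> < M2 c"
proof -
  have "set_pmf (pmf_of_set {..<M1 c}) = {..<M1 c}" "set_pmf (pmf_of_set {..<M2 c}) = {..<M2 c}"
    using assms by (auto intro!: set_pmf_of_set)
  then show "W1v \<omega> < M1 c" "W2v \<omega> < M2 c"
    using assms(3) unfolding src_decomp by (auto simp: W1v_def W2v_def)
qed

lemma map_W1: "M1 c > 0 \<Longrightarrow> map_pmf W1v (src c) = pmf_of_set {..<M1 c}"
  unfolding src_decomp map_pmf_comp
  by (simp add: W1v_def split_def map_fst_pair'[where f="\<lambda>x. fst x", simplified] map_fst_pair_pmf)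

lemma map_W2: "M2 c > 0 \<Longrightarrow> map_pmf W2v (src c) = pmf_of_set {..<M2 c}"
  unfolding src_decomp map_pmf_comp
  by (simp add: W2v_def split_def map_snd_pair'[where f="\<lambda>x. fst x", simplified] map_fst_pair_pmf)



definition vecs :: "nat set \<Rightarrow> f2vec set" where
  "vecs S = {v. \<forall>j. v j \<longrightarrow> j \<in> S}"

definition lsts :: "nat \<Rightarrow> 'a set \<Rightarrow> 'a list set" where
  "lsts N A = {xs. set xs \<subseteq> A \<and> length xs = N}"

lemma vecs_finite_card:
  assumes "finite S"
  shows "finite (vecs S)" "card (vecs S) = 2 ^ card S"
proof -
  have bij: "bij_betw (\<lambda>v. {j. v j}) (vecs S) (Pow S)"
    by (rule bij_betwI[where g="\<lambda>T j. j \<in> T"]) (auto simp: vecs_def)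
  show "finite (vecs S)" using bij_betw_finite[OF bij] assms by simp
  show "card (vecs S) = 2 ^ card S" using bij_betw_same_card[OF bij] assms by (simp add: card_Pow)
qed

lemma lsts_finite_card:
  assumes "finite A"
  shows "finite (lsts N A)" "card (lsts N A) = card A ^ N"
  unfolding lsts_def using finite_lists_length_eq[OF assms] card_lists_length_eq[OF assms] by auto

lemma lsts_map: "(\<And>t. t < N \<Longrightarrow> f t \<in> A) \<Longrightarrow> map f [0..<N] \<in> lsts N A"
  by (auto simp: lsts_def)

lemma fin_imgI: "finite A \<Longrightarrow> (\<And>\<omega>. \<omega> \<in> S \<Longrightarrow> X \<omega> \<in> A) \<Longrightarrow> finite (X ` S)"
  by (rule finite_subset[of _ A]) auto

lemma H_lsts_vecs:
  assumes "finite S" "\<And>\<omega>. \<omega> \<in> set_pmf \<mu> \<Longrightarrow> X \<omega> \<in> lsts N (vecs S)"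
  shows "H \<mu> X \<le> real N * real (card S)"
proof -
  have "H \<mu> X \<le> log 2 (card (lsts N (vecs S)))"
    by (rule H_card) (use assms lsts_finite_card(1)[OF vecs_finite_card(1)] in auto)
  also have "\<dots> = log 2 ((2::real) ^ (card S * N))"
    using assms by (simp add: lsts_finite_card vecs_finite_card power_mult)
  also have "\<dots> = real N * real (card S)" by (simp add: log_nat_power)
  finally show ?thesis .
qed

lemma mvmult_vecs: "mvmult q M x \<in> vecs {1..q}"
  by (auto simp: vecs_def mvmult_def)

lemma vadd_vecs: "x \<in> vecs S \<Longrightarrow> y \<in> vecs S \<Longrightarrow> vadd x y \<in> vecs S"
  by (auto simp: vecs_def vadd_def)

lemma vadd_cancel: "vadd u (vadd u z) = z"
  by (auto simp: vadd_def fun_eq_iff)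

lemma Y1_mem: "Y1 m n N c \<omega> \<in> lsts N (vecs {1..max m n})"
  unfolding Y1_def Let_def by (intro lsts_map vadd_vecs mvmult_vecs)

lemma Y2_mem: "Y2 m n N c \<omega> \<in> lsts N (vecs {1..max m n})"
  unfolding Y2_def Let_def by (intro lsts_map mvmult_vecs)

lemma Y1_eq:
  assumes "m < n"
  shows "Y1 m n N c \<omega> = map (\<lambda>t. vadd (mvmult n (mpow n (downshift n) (n - m)) (x1 c \<omega> t))
                                        (mvmult n (mpow n (downshift n) 0) (x2 c \<omega> t))) [0..<N]"
  using assms by (simp add: Y1_def Let_def max_def)

lemma Y2_eq:
  assumes "m < n"
  shows "Y2 m n N c \<omega> = map (\<lambda>t. mvmult n (mpow n (downshift n) (n - m)) (x2 c \<omega> t)) [0..<N]"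
  using assms by (simp add: Y2_def Let_def max_def)

lemma M_pos: "0 < nat \<lceil>2 powr (x::real)\<rceil>"
proof -
  have "0 < 2 powr x" by simp
  then have "0 < \<lceil>2 powr x\<rceil>" by (simp add: zero_less_ceiling)
  then show ?thesis by simp
qed

lemma countable_range_src: "countable (range (X :: nat \<times> nat \<times> nat \<times> nat \<Rightarrow> 'a))"
  by (rule countable_image) simp



lemma converse_N:
  fixes m n C N :: nat and c :: code and R1 R2 :: real
  assumes mn: "m < n" "n < 2*m" and sc: "secure_code m n C N R1 R2 c"
  defines "Pe \<equiv> err_prob m n N c"
  shows "log 2 (M1 c) \<le> real N * real m + 1 + Pe * log 2 (M1 c)"
    and "log 2 (M2 c) \<le> real N * (2 * real m - real n) + 1 + Pe * log 2 (M2 c)"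
    and "log 2 (M1 c) + log 2 (M2 c) \<le> real N * (real m + real C) + 2 + Pe * (log 2 (M1 c) + log 2 (M2 c))"
proof -
  define \<mu> where "\<mu> = src c"
  define k where "k = n - m"
  have k: "1 \<le> k" "k \<le> m" "2*k \<le> n" "card {k+1..n} = m" "card {2*k+1..n} = 2*m - n"
    using mn by (auto simp: k_def)
  have M1p: "0 < M1 c" and M2p: "0 < M2 c" using sc M_pos by (auto simp: secure_code_def)
  have link: "\<And>t w2 q2. link c t w2 q2 < 2 ^ C" using sc by (auto simp: secure_code_def)
  define Dk where "Dk = mpow n (downshift n) k"
  define D0 where "D0 = mpow n (downshift n) 0"
  have Dk: "mvmult n Dk x j = (1 \<le> j \<and> j \<le> n \<and> k + 1 \<le> j \<and> x (j - k))" for x j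
    unfolding Dk_def mvmult_downshift ..
  have D0: "mvmult n D0 x j = (1 \<le> j \<and> j \<le> n \<and> x j)" for x j
    unfolding D0_def mvmult_downshift by auto
  define z where "z t \<omega> = mvmult n D0 (x2 c \<omega> t)" for t \<omega>
  define u where "u t \<omega> = mvmult n Dk (x1 c \<omega> t)" for t \<omega>
  define Y1' where "Y1' \<omega> = map (\<lambda>t. vadd (u t \<omega>) (z t \<omega>)) [0..<N]" for \<omega>
  define Y2' where "Y2' \<omega> = map (\<lambda>t. mvmult n Dk (x2 c \<omega> t)) [0..<N]" for \<omega>
  have Y1eq: "Y1 m n N c = Y1'"
    unfolding Y1'_def u_def z_def Dk_def D0_def k_def using Y1_eq[OF mn(1)] by (simp add: fun_eq_iff)
  have Y2eq: "Y2 m n N c = Y2'"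
    unfolding Y2'_def Dk_def k_def using Y2_eq[OF mn(1)] by (simp add: fun_eq_iff)
  define Zl where "Zl \<omega> = map (\<lambda>t. z t \<omega>) [0..<N]" for \<omega>
  define LS where "LS = lsts N {..<(2::nat)^C}"
  define Lk where "Lk \<omega> = map (\<lambda>s. link c s (W2v \<omega>) (snd (snd (snd \<omega>)))) [0..<N]" for \<omega>
  define \<Phi> where "\<Phi> \<omega> = (\<lambda>ls. if ls \<in> LS then map (\<lambda>t. mvmult n Dk (enc1 c t (W1v \<omega>) (fst (snd (snd \<omega>))) (take t ls))) [0..<N] else undefined)" for \<omega>
  define A where "A \<omega> = map (\<lambda>t j. j \<le> k \<and> z t \<omega> j) [0..<N]" for \<omega>
  define Vv where "Vv \<omega> = map (\<lambda>t j. k < j \<and> vadd (u t \<omega>) (z t \<omega>) j) [0..<N]" for \<omega>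
  define B where "B \<omega> = map (\<lambda>t j. 2*k < j \<and> mvmult n Dk (x2 c \<omega> t) j) [0..<N]" for \<omega>

  have rY1AV: "Y1' \<omega> = map2 (\<lambda>a v j. a j \<or> v j) (A \<omega>) (Vv \<omega>)" for \<omega>
    unfolding Y1'_def A_def Vv_def map2_map_map
    by (auto simp: fun_eq_iff vadd_def u_def Dk)
  have rAY1: "A \<omega> = map (\<lambda>e j. j \<le> k \<and> e j) (Y1' \<omega>)" for \<omega>
    unfolding Y1'_def A_def by (auto simp: fun_eq_iff vadd_def u_def Dk)
  have rVY1: "Vv \<omega> = map (\<lambda>e j. k < j \<and> e j) (Y1' \<omega>)" for \<omega>
    unfolding Y1'_def Vv_def by auto
  have rY2AB: "Y2' \<omega> = map2 (\<lambda>a b j. (k < j \<and> j \<le> 2*k \<and> a (j - k)) \<or> b j) (A \<omega>) (B \<omega>)" for \<omega>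
    unfolding Y2'_def A_def B_def map2_map_map using k
    by (auto simp: fun_eq_iff z_def Dk D0)
  have rAY2: "A \<omega> = map (\<lambda>y i. 1 \<le> i \<and> i \<le> k \<and> y (i + k)) (Y2' \<omega>)" for \<omega>
    unfolding Y2'_def A_def using k by (auto simp: fun_eq_iff z_def Dk D0)
  have rBY2: "B \<omega> = map (\<lambda>y j. 2*k < j \<and> y j) (Y2' \<omega>)" for \<omega>
    unfolding Y2'_def B_def by auto
  have rAZ: "A \<omega> = map (\<lambda>e j. j \<le> k \<and> e j) (Zl \<omega>)" for \<omega>
    unfolding Zl_def A_def by auto
  have rBZ: "B \<omega> = map (\<lambda>e j. 2*k < j \<and> j \<le> n \<and> e (j - k)) (Zl \<omega>)" for \<omega>
    unfolding Zl_def B_def using k by (auto simp: fun_eq_iff z_def Dk D0)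
  have LkLS: "Lk \<omega> \<in> LS" for \<omega>
    unfolding Lk_def LS_def by (rule lsts_map) (use link in auto)
  have rPhi: "\<Phi> \<omega> (Lk \<omega>) = map (\<lambda>t. u t \<omega>) [0..<N]" for \<omega>
    using LkLS[of \<omega>] unfolding \<Phi>_def
    by (cases \<omega>) (auto simp: u_def x1_def Lk_def take_map W1v_def W2v_def)
  have rY1PLZ: "Y1' \<omega> = map2 vadd (\<Phi> \<omega> (Lk \<omega>)) (Zl \<omega>)" for \<omega>
    unfolding rPhi Y1'_def Zl_def map2_map_map ..
  have rZPLY: "Zl \<omega> = map2 vadd (\<Phi> \<omega> (Lk \<omega>)) (Y1' \<omega>)" for \<omega>
    unfolding rPhi Y1'_def Zl_def map2_map_map by (simp add: vadd_cancel)

  have Vn: "mvmult n M x \<in> vecs {1..n}" for M x by (rule mvmult_vecs)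
  have mY1: "Y1' \<omega> \<in> lsts N (vecs {1..n})" for \<omega>
    unfolding Y1'_def u_def z_def by (intro lsts_map vadd_vecs Vn)
  have mY2: "Y2' \<omega> \<in> lsts N (vecs {1..n})" for \<omega>
    unfolding Y2'_def by (intro lsts_map Vn)
  have mZ: "Zl \<omega> \<in> lsts N (vecs {1..n})" for \<omega>
    unfolding Zl_def z_def by (intro lsts_map Vn)
  have mA: "A \<omega> \<in> lsts N (vecs {1..n})" for \<omega>
    unfolding A_def z_def by (rule lsts_map) (auto simp: vecs_def D0)
  have mV: "Vv \<omega> \<in> lsts N (vecs {k+1..n})" for \<omega>
    unfolding Vv_def by (rule lsts_map) (use Vn in \<open>auto simp: vecs_def vadd_def u_def z_def Dk D0\<close>)
  have mB: "B \<omega> \<in> lsts N (vecs {2*k+1..n})" for \<omega>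
    unfolding B_def by (rule lsts_map) (auto simp: vecs_def Dk)
  have mPhi: "\<Phi> \<omega> \<in> PiE LS (\<lambda>_. lsts N (vecs {1..n}))" for \<omega>
    unfolding \<Phi>_def by (auto simp: PiE_def extensional_def intro!: lsts_map mvmult_vecs[of n, simplified])
  have fLS: "finite LS" unfolding LS_def by (rule lsts_finite_card) simp
  have fVn: "finite (lsts N (vecs {1..n}))" by (intro lsts_finite_card vecs_finite_card) simp
  have fW1: "finite (W1v ` set_pmf \<mu>)"
    by (rule fin_imgI[of "{..<M1 c}"]) (use set_src[OF M1p M2p] in \<open>auto simp: \<mu>_def\<close>)
  have fW2: "finite (W2v ` set_pmf \<mu>)"
    by (rule fin_imgI[of "{..<M2 c}"]) (use set_src[OF M1p M2p] in \<open>auto simp: \<mu>_def\<close>)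
  have fY1: "finite (Y1' ` set_pmf \<mu>)" by (rule fin_imgI[OF fVn mY1])
  have fY2: "finite (Y2' ` set_pmf \<mu>)" by (rule fin_imgI[OF fVn mY2])
  have fZ: "finite (Zl ` set_pmf \<mu>)" by (rule fin_imgI[OF fVn mZ])
  have fA: "finite (A ` set_pmf \<mu>)" by (rule fin_imgI[OF fVn mA])
  have fV: "finite (Vv ` set_pmf \<mu>)"
    by (rule fin_imgI[of "lsts N (vecs {k+1..n})"]) (use mV in \<open>auto intro: lsts_finite_card vecs_finite_card\<close>)
  have fB: "finite (B ` set_pmf \<mu>)"
    by (rule fin_imgI[of "lsts N (vecs {2*k+1..n})"]) (use mB in \<open>auto intro: lsts_finite_card vecs_finite_card\<close>)
  have fL: "finite (Lk ` set_pmf \<mu>)" by (rule fin_imgI[OF fLS LkLS])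
  have fPhi: "finite (\<Phi> ` set_pmf \<mu>)" by (rule fin_imgI[OF finite_PiE[OF fLS] mPhi]) (rule fVn)
  note fins = fW1 fW2 fY1 fY2 fZ fA fV fB fL fPhi

  have HV: "H \<mu> Vv \<le> real N * real m"
  proof -
    have "H \<mu> Vv \<le> real N * real (card {k+1..n})" by (rule H_lsts_vecs) (use mV in auto)
    then show ?thesis unfolding k(4) .
  qed
  have HB: "H \<mu> B \<le> real N * (2 * real m - real n)"
  proof -
    have "H \<mu> B \<le> real N * real (card {2*k+1..n})" by (rule H_lsts_vecs) (use mB in auto)
    then show ?thesis unfolding k(5) using mn by (simp add: of_nat_diff)
  qed
  have HL: "H \<mu> Lk \<le> real N * real C"
  proof -
    have "H \<mu> Lk \<le> log 2 (card LS)" by (rule H_card[OF fLS LkLS])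
    also have "card LS = (2^C)^N" unfolding LS_def by (subst lsts_finite_card) auto
    also have "log 2 (real ((2^C)^N)) = real N * real C"
      by (simp add: log_nat_power power_mult[symmetric] mult.commute)
    finally show ?thesis .
  qed
  have HW1: "H \<mu> W1v = log 2 (M1 c)"
    unfolding H_def \<mu>_def map_W1[OF M1p] by (subst ent_pmf_of_set) (use M1p in auto)
  have HW2: "H \<mu> W2v = log 2 (M2 c)"
    unfolding H_def \<mu>_def map_W2[OF M2p] by (subst ent_pmf_of_set) (use M2p in auto)
  have lM1: "0 \<le> log 2 (M1 c)" using M1p by simp
  have lM2: "0 \<le> log 2 (M2 c)" using M2p by simp

  have err1: "measure \<mu> {\<omega>. dec1 c (Y1' \<omega>) \<noteq> W1v \<omega>} \<le> Pe"
    unfolding Pe_def err_prob_def \<mu>_def Y1eq Y2eq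
    by (rule measure_pmf.finite_measure_mono) auto
  have err2: "measure \<mu> {\<omega>. dec2 c (Y2' \<omega>) \<noteq> W2v \<omega>} \<le> Pe"
    unfolding Pe_def err_prob_def \<mu>_def Y1eq Y2eq
    by (rule measure_pmf.finite_measure_mono) auto
  have fano1: "H \<mu> (\<lambda>\<omega>. (W1v \<omega>, Y1' \<omega>)) - H \<mu> Y1' \<le> 1 + Pe * log 2 (M1 c)"
  proof -
    have "H \<mu> (\<lambda>\<omega>. (W1v \<omega>, Y1' \<omega>)) - H \<mu> Y1' \<le> 1 + measure \<mu> {\<omega>. dec1 c (Y1' \<omega>) \<noteq> W1v \<omega>} * log 2 (M1 c)"
      by (rule H_fano[where A="{..<M1 c}"]) (use fins set_src[OF M1p M2p] in \<open>auto intro!: finite_pair_img simp: \<mu>_def\<close>)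
    also have "\<dots> \<le> 1 + Pe * log 2 (M1 c)" using err1 lM1 by (simp add: mult_right_mono)
    finally show ?thesis .
  qed
  have fano2: "H \<mu> (\<lambda>\<omega>. (W2v \<omega>, Y2' \<omega>)) - H \<mu> Y2' \<le> 1 + Pe * log 2 (M2 c)"
  proof -
    have "H \<mu> (\<lambda>\<omega>. (W2v \<omega>, Y2' \<omega>)) - H \<mu> Y2' \<le> 1 + measure \<mu> {\<omega>. dec2 c (Y2' \<omega>) \<noteq> W2v \<omega>} * log 2 (M2 c)"
      by (rule H_fano[where A="{..<M2 c}"]) (use fins set_src[OF M1p M2p] in \<open>auto intro!: finite_pair_img simp: \<mu>_def\<close>)
    also have "\<dots> \<le> 1 + Pe * log 2 (M2 c)" using err2 lM2 by (simp add: mult_right_mono)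
    finally show ?thesis .
  qed

  define F where "F = (\<lambda>(w1::nat,q1::nat). (w1, \<lambda>ls. if ls \<in> LS then map (\<lambda>t. mvmult n Dk (enc1 c t w1 q1 (take t ls))) [0..<N] else undefined))"
  define G where "G = (\<lambda>(w2::nat,q2::nat). (map (\<lambda>t. mvmult n D0 (enc2 c t w2 q2)) [0..<N], map (\<lambda>s. link c s w2 q2) [0..<N]))"
  have eF: "(W1v \<omega>, \<Phi> \<omega>) = F (fst \<omega>, fst (snd (snd \<omega>)))" for \<omega>
    by (cases \<omega>) (simp add: F_def \<Phi>_def W1v_def cong: if_cong)
  have eG: "(Zl \<omega>, Lk \<omega>) = G (fst (snd \<omega>), snd (snd (snd \<omega>)))" for \<omega>
    by (cases \<omega>) (simp add: G_def Zl_def Lk_def z_def x2_def W2v_def)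
  have ind1: "map_pmf (\<lambda>\<omega>. ((W1v \<omega>, \<Phi> \<omega>), (Zl \<omega>, Lk \<omega>))) \<mu> =
      pair_pmf (map_pmf (\<lambda>\<omega>. (W1v \<omega>, \<Phi> \<omega>)) \<mu>) (map_pmf (\<lambda>\<omega>. (Zl \<omega>, Lk \<omega>)) \<mu>)"
    unfolding eF eG \<mu>_def by (rule src_indep)
  have ind2: "map_pmf (\<lambda>\<omega>. (W1v \<omega>, Zl \<omega>)) \<mu> = pair_pmf (map_pmf W1v \<mu>) (map_pmf Zl \<mu>)"
  proof -
    have "map_pmf (\<lambda>\<omega>. (W1v \<omega>, Zl \<omega>)) \<mu> = map_pmf (\<lambda>(a,b). (fst a, fst b)) (map_pmf (\<lambda>\<omega>. ((W1v \<omega>, \<Phi> \<omega>), (Zl \<omega>, Lk \<omega>))) \<mu>)"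
      by (simp add: map_pmf_comp)
    also have "\<dots> = pair_pmf (map_pmf W1v \<mu>) (map_pmf Zl \<mu>)"
      unfolding ind1 map_pair by (simp add: map_pmf_comp)
    finally show ?thesis .
  qed
  have ind3: "map_pmf (\<lambda>\<omega>. (W2v \<omega>, A \<omega>)) \<mu> = pair_pmf (map_pmf W2v \<mu>) (map_pmf A \<mu>)"
  proof -
    have "MI c W2v (Y1 m n N c) = 0" using sc by (simp add: secure_code_def)
    then have "map_pmf (\<lambda>\<omega>. (W2v \<omega>, Y1' \<omega>)) \<mu> = pair_pmf (map_pmf W2v \<mu>) (map_pmf Y1' \<mu>)"
      unfolding MI_def Y1eq \<mu>_def
      by (subst (asm) mi_zero_iff) (use fins in \<open>auto intro!: finite_pair_img countable_range_src simp: \<mu>_def\<close>)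
    then have "map_pmf (apsnd (\<lambda>e. map (\<lambda>e j. j \<le> k \<and> e j) e)) (map_pmf (\<lambda>\<omega>. (W2v \<omega>, Y1' \<omega>)) \<mu>) =
        pair_pmf (map_pmf W2v \<mu>) (map_pmf (\<lambda>e. map (\<lambda>e j. j \<le> k \<and> e j) e) (map_pmf Y1' \<mu>))"
      by (simp add: pair_map_pmf2)
    then show ?thesis by (simp add: map_pmf_comp rAY1[symmetric])
  qed
  have fPair: "finite ((\<lambda>\<omega>. (X \<omega>, Y \<omega>)) ` set_pmf \<mu>)" if "finite (X ` set_pmf \<mu>)" "finite (Y ` set_pmf \<mu>)"
    for X :: "nat \<times> nat \<times> nat \<times> nat \<Rightarrow> 'x" and Y :: "nat \<times> nat \<times> nat \<times> nat \<Rightarrow> 'y"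
    using that by (rule finite_pair_img)

  have ssa1: "H \<mu> (\<lambda>\<omega>. (Y1' \<omega>, W1v \<omega>, Zl \<omega>)) + H \<mu> Y1' \<le> H \<mu> (\<lambda>\<omega>. (Y1' \<omega>, W1v \<omega>)) + H \<mu> (\<lambda>\<omega>. (Y1' \<omega>, Zl \<omega>))"
    by (rule H_ssa) (intro fPair fins)
  have e1: "H \<mu> (\<lambda>\<omega>. (Y1' \<omega>, W1v \<omega>)) = H \<mu> (\<lambda>\<omega>. (W1v \<omega>, Y1' \<omega>))"
    by (rule H_eq[where f=prod.swap and g=prod.swap]) (auto intro!: fPair fins)
  have e2: "H \<mu> (\<lambda>\<omega>. (W1v \<omega>, Zl \<omega>)) \<le> H \<mu> (\<lambda>\<omega>. (Y1' \<omega>, W1v \<omega>, Zl \<omega>))"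
    by (rule H_mono[where f=snd]) (auto intro!: fPair fins)
  have e3: "H \<mu> (\<lambda>\<omega>. (W1v \<omega>, Zl \<omega>)) = H \<mu> W1v + H \<mu> Zl"
    by (rule H_indep[OF fW1 fZ ind2])
  have e4: "H \<mu> (\<lambda>\<omega>. (Y1' \<omega>, Zl \<omega>)) \<le> H \<mu> (\<lambda>\<omega>. (Vv \<omega>, Zl \<omega>))"
    by (rule H_mono[where f="\<lambda>(v,zz). (map2 (\<lambda>a v j. a j \<or> v j) (map (\<lambda>e j. j \<le> k \<and> e j) zz) v, zz)"])
       (auto intro!: fPair fins simp: rY1AV rAZ[symmetric])
  have e5: "H \<mu> (\<lambda>\<omega>. (Vv \<omega>, Zl \<omega>)) \<le> H \<mu> Vv + H \<mu> Zl"
    by (rule H_subadd) (intro fPair fins)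
  have I1a: "H \<mu> W1v + H \<mu> Y1' - H \<mu> (\<lambda>\<omega>. (W1v \<omega>, Y1' \<omega>)) \<le> real N * real m"
    using ssa1 e1 e2 e3 e4 e5 HV by linarith

  have a1: "H \<mu> Y1' \<le> H \<mu> (\<lambda>\<omega>. (A \<omega>, Vv \<omega>))"
    by (rule H_mono[where f="\<lambda>(a,v). map2 (\<lambda>a v j. a j \<or> v j) a v"]) (auto intro!: fPair fins simp: rY1AV)
  have a1': "H \<mu> (\<lambda>\<omega>. (A \<omega>, Vv \<omega>)) \<le> H \<mu> A + H \<mu> Vv"
    by (rule H_subadd) (intro fPair fins)
  have a2: "H \<mu> (\<lambda>\<omega>. (W1v \<omega>, Y1' \<omega>, \<Phi> \<omega>)) + H \<mu> W1v \<le> H \<mu> (\<lambda>\<omega>. (W1v \<omega>, Y1' \<omega>)) + H \<mu> (\<lambda>\<omega>. (W1v \<omega>, \<Phi> \<omega>))"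
    by (rule H_ssa) (intro fPair fins)
  have a3: "H \<mu> (\<lambda>\<omega>. ((W1v \<omega>, Y1' \<omega>, \<Phi> \<omega>), Lk \<omega>)) \<le> H \<mu> (\<lambda>\<omega>. (W1v \<omega>, Y1' \<omega>, \<Phi> \<omega>)) + H \<mu> Lk"
    by (rule H_subadd) (intro fPair fins)
  have a4: "H \<mu> (\<lambda>\<omega>. ((W1v \<omega>, Y1' \<omega>, \<Phi> \<omega>), Lk \<omega>)) = H \<mu> (\<lambda>\<omega>. ((W1v \<omega>, \<Phi> \<omega>), (Zl \<omega>, Lk \<omega>)))"
    by (rule H_eq[where f="\<lambda>((w,p),(zz,l)). ((w, map2 vadd (p l) zz, p), l)"
                   and g="\<lambda>((w,y,p),l). ((w,p),(map2 vadd (p l) y, l))"])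
       (auto intro!: fPair fins simp: rY1PLZ[symmetric] rZPLY[symmetric])
  have a5: "H \<mu> (\<lambda>\<omega>. ((W1v \<omega>, \<Phi> \<omega>), (Zl \<omega>, Lk \<omega>))) = H \<mu> (\<lambda>\<omega>. (W1v \<omega>, \<Phi> \<omega>)) + H \<mu> (\<lambda>\<omega>. (Zl \<omega>, Lk \<omega>))"
    by (rule H_indep[OF _ _ ind1]) (intro fPair fins)+
  have a6: "H \<mu> (\<lambda>\<omega>. (A \<omega>, B \<omega>)) \<le> H \<mu> (\<lambda>\<omega>. (Zl \<omega>, Lk \<omega>))"
    by (rule H_mono[where f="\<lambda>(zz,l). (map (\<lambda>e j. j \<le> k \<and> e j) zz, map (\<lambda>e j. 2*k < j \<and> j \<le> n \<and> e (j - k)) zz)"])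
       (auto intro!: fPair fins simp: rAZ[symmetric] rBZ[symmetric])
  have b1: "H \<mu> Y2' = H \<mu> (\<lambda>\<omega>. (A \<omega>, B \<omega>))"
    by (rule H_eq[where f="\<lambda>(a,b). map2 (\<lambda>a b j. (k < j \<and> j \<le> 2*k \<and> a (j - k)) \<or> b j) a b"
                   and g="\<lambda>y. (map (\<lambda>y i. 1 \<le> i \<and> i \<le> k \<and> y (i + k)) y, map (\<lambda>y j. 2*k < j \<and> y j) y)"])
       (intro fPair fins, subst rY2AB, simp, subst rAY2, subst rBY2, simp)
  have b2: "H \<mu> (\<lambda>\<omega>. (W2v \<omega>, A \<omega>)) \<le> H \<mu> (\<lambda>\<omega>. (W2v \<omega>, Y2' \<omega>))"
    by (rule H_mono[where f="\<lambda>(w,y). (w, map (\<lambda>y i. 1 \<le> i \<and> i \<le> k \<and> y (i + k)) y)"])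
       (intro fPair fins, subst rAY2, simp)
  have b3: "H \<mu> (\<lambda>\<omega>. (W2v \<omega>, A \<omega>)) = H \<mu> W2v + H \<mu> A"
    by (rule H_indep[OF fW2 fA ind3])
  have b4: "H \<mu> (\<lambda>\<omega>. (A \<omega>, B \<omega>)) \<le> H \<mu> A + H \<mu> B"
    by (rule H_subadd) (intro fPair fins)
  have I2a: "H \<mu> W2v + H \<mu> Y2' - H \<mu> (\<lambda>\<omega>. (W2v \<omega>, Y2' \<omega>)) \<le> H \<mu> (\<lambda>\<omega>. (A \<omega>, B \<omega>)) - H \<mu> A"
    using b1 b2 b3 by linarith
  have I1b: "H \<mu> W1v + H \<mu> Y1' - H \<mu> (\<lambda>\<omega>. (W1v \<omega>, Y1' \<omega>)) \<le> H \<mu> A + real N * real m - H \<mu> (\<lambda>\<omega>. (A \<omega>, B \<omega>)) + real N * real C"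
    using a1 a1' a2 a3 a4 a5 a6 HL HV by linarith

  show "log 2 (M1 c) \<le> real N * real m + 1 + Pe * log 2 (M1 c)"
    using I1a fano1 HW1 by linarith
  show "log 2 (M2 c) \<le> real N * (2 * real m - real n) + 1 + Pe * log 2 (M2 c)"
    using I2a fano2 HW2 b4 HB by linarith
  show "log 2 (M1 c) + log 2 (M2 c) \<le> real N * (real m + real C) + 2 + Pe * (log 2 (M1 c) + log 2 (M2 c))"
    using I1b I2a fano1 fano2 HW1 HW2 by (simp add: algebra_simps)
qed



lemma asym_bound:
  fixes Pe L :: "nat \<Rightarrow> real" and R b K :: real
  assumes lim: "Pe \<longlonglongrightarrow> 0" and P01: "\<And>N. 0 \<le> Pe N \<and> Pe N \<le> 1"
    and low: "\<And>N. real N * R \<le> L N" and up: "\<And>N. L N \<le> real N * b + K + Pe N * L N"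
  shows "R \<le> b"
proof -
  have l1: "(\<lambda>N. (1 - Pe N) * R) \<longlonglongrightarrow> (1 - 0) * R"
    by (intro tendsto_intros lim)
  have l2: "(\<lambda>N. b + K / real N) \<longlonglongrightarrow> b + 0"
    by (intro tendsto_intros tendsto_divide_0[OF tendsto_const] filterlim_real_sequentially)
  have ev: "\<forall>N\<ge>1. (1 - Pe N) * R \<le> b + K / real N"
  proof (intro allI impI)
    fix N :: nat assume N: "N \<ge> 1"
    have "(1 - Pe N) * (real N * R) \<le> (1 - Pe N) * L N"
      using P01[of N] low[of N] by (intro mult_left_mono) auto
    also have "\<dots> \<le> real N * b + K" using up[of N] by (simp add: algebra_simps)
    finally have "real N * ((1 - Pe N) * R) \<le> real N * (b + K / real N)"
      using N by (simp add: algebra_simps)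
    then show "(1 - Pe N) * R \<le> b + K / real N" using N by (simp add: mult_le_cancel_left)
  qed
  show ?thesis using LIMSEQ_le[OF l1 l2] ev by auto
qed

lemma log_M_ge:
  assumes "0 \<le> (R::real)"
  shows "real N * R \<le> log 2 (real (nat \<lceil>2 powr (real N * R)\<rceil>))"
proof -
  have "2 powr (real N * R) \<le> real (nat \<lceil>2 powr (real N * R)\<rceil>)"
  proof -
    have "2 powr (real N * R) \<le> of_int \<lceil>2 powr (real N * R)\<rceil>" by (rule le_of_int_ceiling)
    moreover have "0 \<le> \<lceil>2 powr (real N * R)\<rceil>"
      using less_le_trans[of "-1" 0 "2 powr (real N * R)"] by (simp add: ceiling_le_zero[symmetric] not_le)
    ultimately show ?thesis by simp
  qed
  then have "log 2 (2 powr (real N * R)) \<le> log 2 (real (nat \<lceil>2 powr (real N * R)\<rceil>))"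
    by (intro log_le_cancel_iff[THEN iffD2]) auto
  then show ?thesis by simp
qed

lemma converse:
  assumes mn: "m < n" "n < 2*m" and ach: "achievable m n C (R1, R2)"
  shows "R1 \<le> real m" "R2 \<le> 2 * real m - real n" "R1 + R2 \<le> real m + real C"
proof -
  obtain cs where R: "0 \<le> R1" "0 \<le> R2" and sc: "\<And>N. secure_code m n C N R1 R2 (cs N)"
    and lim: "(\<lambda>N. err_prob m n N (cs N)) \<longlonglongrightarrow> 0"
    using ach unfolding achievable_def by auto
  define Pe where "Pe N = err_prob m n N (cs N)" for N
  have P01: "0 \<le> Pe N \<and> Pe N \<le> 1" for N unfolding Pe_def err_prob_def by auto
  have M1: "M1 (cs N) = nat \<lceil>2 powr (real N * R1)\<rceil>" and M2: "M2 (cs N) = nat \<lceil>2 powr (real N * R2)\<rceil>" for N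
    using sc[of N] by (auto simp: secure_code_def)
  note cv = converse_N[OF mn sc]
  show "R1 \<le> real m"
  proof (rule asym_bound[OF lim[folded Pe_def] P01, where L="\<lambda>N. log 2 (M1 (cs N))" and K=1])
    fix N
    show "real N * R1 \<le> log 2 (M1 (cs N))" unfolding M1 by (rule log_M_ge[OF R(1)])
    show "log 2 (M1 (cs N)) \<le> real N * real m + 1 + Pe N * log 2 (M1 (cs N))"
      unfolding Pe_def by (rule cv(1))
  qed
  show "R2 \<le> 2 * real m - real n"
  proof (rule asym_bound[OF lim[folded Pe_def] P01, where L="\<lambda>N. log 2 (M2 (cs N))" and K=1])
    fix N
    show "real N * R2 \<le> log 2 (M2 (cs N))" unfolding M2 by (rule log_M_ge[OF R(2)])
    show "log 2 (M2 (cs N)) \<le> real N * (2 * real m - real n) + 1 + Pe N * log 2 (M2 (cs N))"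
      unfolding Pe_def by (rule cv(2))
  qed
  show "R1 + R2 \<le> real m + real C"
  proof (rule asym_bound[OF lim[folded Pe_def] P01, where L="\<lambda>N. log 2 (M1 (cs N)) + log 2 (M2 (cs N))" and K=2])
    fix N
    show "real N * (R1 + R2) \<le> log 2 (M1 (cs N)) + log 2 (M2 (cs N))"
      using log_M_ge[OF R(1), of N] log_M_ge[OF R(2), of N] unfolding M1 M2 by (simp add: algebra_simps)
    show "log 2 (M1 (cs N)) + log 2 (M2 (cs N)) \<le> real N * (real m + real C) + 2 + Pe N * (log 2 (M1 (cs N)) + log 2 (M2 (cs N)))"
      unfolding Pe_def by (rule cv(3))
  qed
qed



definition ofs :: "(nat \<Rightarrow> nat) \<Rightarrow> nat \<Rightarrow> nat" where
  "ofs f t = (\<Sum>s<t. f s)"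

lemma ofs_Suc: "ofs f (Suc t) = ofs f t + f t"
  by (simp add: ofs_def)

lemma ofs_mono: "s \<le> t \<Longrightarrow> ofs f s \<le> ofs f t"
  unfolding ofs_def by (rule sum_mono2) auto

lemma ofs_slot_lt: "t < N \<Longrightarrow> i < f t \<Longrightarrow> ofs f t + i < ofs f N"
  using ofs_mono[of "Suc t" N f] by (simp add: ofs_Suc)

lemma ofs_cover: "b < ofs f N \<Longrightarrow> \<exists>t<N. ofs f t \<le> b \<and> b < ofs f t + f t"
proof (induction N)
  case 0 then show ?case by (simp add: ofs_def)
next
  case (Suc N)
  show ?case
  proof (cases "b < ofs f N")
    case True then show ?thesis using Suc.IH by (meson less_SucI)
  next
    case False then show ?thesis using Suc.prems by (auto simp: ofs_Suc intro!: exI[of _ N])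
  qed
qed

lemma bits_eq_unique:
  fixes w w' :: nat
  assumes "w < 2^b" "w' < 2^b" "\<And>i. i < b \<Longrightarrow> bit w i = bit w' i"
  shows "w = w'"
proof -
  have "take_bit b w = take_bit b w'"
    by (rule bit_eq_iff[THEN iffD2]) (auto simp: bit_take_bit_iff assms(3))
  then show ?thesis using assms(1,2) by (simp add: take_bit_nat_eq_self_iff[THEN iffD2])
qed

lemma xor_lt: "(q::nat) < 2^Z \<Longrightarrow> D < 2^Z \<Longrightarrow> xor q D < 2^Z"
proof -
  assume a: "q < 2^Z" "D < 2^Z"
  have "take_bit Z (xor q D) = xor q D"
    using a by (simp add: take_bit_xor take_bit_nat_eq_self_iff[THEN iffD2])
  then show ?thesis by (metis take_bit_nat_less_exp)
qed

lemma xor_xor_cancel: "xor (xor (q::nat) D) D = q"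
  by (rule bit_eq_iff[THEN iffD2]) (auto simp: bit_xor_iff)

lemma xor_uniform:
  assumes "(D::nat) < 2^Z"
  shows "map_pmf (\<lambda>q. xor q D) (pmf_of_set {..<2^Z}) = pmf_of_set {..<(2::nat)^Z}"
proof -
  have inj: "inj_on (\<lambda>q. xor q D) {..<2^Z}"
    by (rule inj_on_inverseI[where g="\<lambda>q. xor q D"]) (simp add: xor_xor_cancel)
  have img: "(\<lambda>q. xor q D) ` {..<2^Z} = {..<2^Z}"
  proof
    show "(\<lambda>q. xor q D) ` {..<2^Z} \<subseteq> {..<2^Z}" using assms xor_lt by auto
    show "{..<2^Z} \<subseteq> (\<lambda>q. xor q D) ` {..<2^Z}"
    proof
      fix q assume "q \<in> {..<(2::nat)^Z}"
      then have "xor q D \<in> {..<2^Z}" "q = xor (xor q D) D" using assms xor_lt by (auto simp: xor_xor_cancel)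
      then show "q \<in> (\<lambda>q. xor q D) ` {..<2^Z}" by blast
    qed
  qed
  have ne: "{..<(2::nat)^Z} \<noteq> {}" by (simp add: lessThan_empty_iff)
  show ?thesis using map_pmf_of_set_inj[OF inj ne] img by simp
qed

lemma src_shift:
  assumes "\<And>w2. D w2 < 2^Z" and "P1 c = pmf_of_set {..<2^Z}"
  shows "map_pmf (\<lambda>(w1,w2,q1,q2). (w1, w2, xor q1 (D w2), q2)) (src c) = src c"
proof -
  have "map_pmf (\<lambda>(w1,w2,q1,q2). (w1, w2, xor q1 (D w2), q2)) (src c) =
     bind_pmf (pmf_of_set {..<M1 c}) (\<lambda>w1. bind_pmf (pmf_of_set {..<M2 c}) (\<lambda>w2.
       bind_pmf (map_pmf (\<lambda>q. xor q (D w2)) (P1 c)) (\<lambda>q1. bind_pmf (P2 c) (\<lambda>q2. return_pmf (w1, w2, q1, q2)))))"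
    unfolding src_def by (simp add: map_bind_pmf bind_map_pmf map_return_pmf)
  also have "\<dots> = src c"
    unfolding src_def assms(2) using xor_uniform[OF assms(1)] by simp
  finally show ?thesis .
qed



locale scheme =
  fixes m n C N T0 M1n M2n :: nat
  assumes mn: "m < n" "n < 2*m"
begin

definition "k = n - m"
definition "e = min C (2*m - n)"
definition "J = 2*m - n - e"
definition "jt s = (if 1 \<le> s \<and> T0 \<le> s then J else 0)"
definition "ft s = (if 1 \<le> s then m - e - jt s else 0)"
definition "Bc = (N - 1) * e"
definition "Zj = ofs jt N"
definition "Dm w2 = take_bit Zj (drop_bit Bc w2)"

lemma params: "1 \<le> k" "e \<le> C" "k + e + J = m" "2*k + e + J = n" "jt s \<le> J" "k + m = n"
  using mn by (auto simp: k_def e_def J_def jt_def)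

definition x2v :: "nat \<Rightarrow> nat \<Rightarrow> f2vec" where
  "x2v w2 t = (\<lambda>p. 1 \<le> t \<and> ((k+1 \<le> p \<and> p \<le> k+e \<and> bit w2 ((t-1)*e + (p-k-1))) \<or>
      (k+e+1 \<le> p \<and> p \<le> k+e+jt t \<and> bit w2 (Bc + ofs jt t + (p-k-e-1)))))"

definition lnk :: "nat \<Rightarrow> nat \<Rightarrow> nat" where
  "lnk s w2 = take_bit e (drop_bit (s*e) w2)"

definition x1v :: "nat \<Rightarrow> nat \<Rightarrow> nat list \<Rightarrow> nat \<Rightarrow> f2vec" where
  "x1v w1 q1 ls t = (\<lambda>p. 1 \<le> t \<and> ((1 \<le> p \<and> p \<le> e \<and> (bit w1 ((t-1)*e + (p-1)) \<noteq> bit (ls ! (t-1)) (p-1))) \<or>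
      (e+1 \<le> p \<and> p \<le> e + jt t \<and> bit q1 (ofs jt t + (p-e-1))) \<or>
      (e + jt t + 1 \<le> p \<and> p \<le> m \<and> bit w1 (Bc + ofs ft t + (p - e - jt t - 1)))))"

definition y1v :: "nat \<Rightarrow> nat \<Rightarrow> nat \<Rightarrow> f2vec" where
  "y1v w1 r t = (\<lambda>j. 1 \<le> t \<and> ((k+1 \<le> j \<and> j \<le> k+e \<and> bit w1 ((t-1)*e + (j-k-1))) \<or>
      (k+e+1 \<le> j \<and> j \<le> k+e+jt t \<and> bit r (ofs jt t + (j-k-e-1))) \<or>
      (k+e+jt t+1 \<le> j \<and> j \<le> n \<and> bit w1 (Bc + ofs ft t + (j-k-e-jt t-1)))))"

definition y2v :: "nat \<Rightarrow> nat \<Rightarrow> f2vec" where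
  "y2v w2 t = (\<lambda>j. 1 \<le> j \<and> j \<le> n \<and> k+1 \<le> j \<and> x2v w2 t (j-k))"

lemma mvmult_mone: "mvmult q (mone q) x j = (1 \<le> j \<and> j \<le> q \<and> x j)"
  using mvmult_downshift[of q 0 x j] by auto

lemma bool_xor_cancel: "((a = (\<not> b)) = (\<not> b)) = (a::bool)" by auto

lemma bit_lnk: "bit (lnk s w2) i = (i < e \<and> bit w2 (s*e + i))"
  by (simp add: lnk_def bit_take_bit_iff bit_drop_bit_eq)

lemma bit_Dm: "bit (Dm w2) b = (b < Zj \<and> bit w2 (Bc + b))"
  by (simp add: Dm_def bit_take_bit_iff bit_drop_bit_eq)

lemma y1_entry:
  assumes t: "t < N" and ls: "1 \<le> t \<Longrightarrow> ls ! (t-1) = lnk (t-1) w2"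
  shows "vadd (mvmult n (mpow n (downshift n) (n - m)) (x1v w1 q1 ls t)) (mvmult n (mpow n (downshift n) 0) (x2v w2 t))
       = y1v w1 (xor q1 (Dm w2)) t"
proof (rule ext)
  fix j
  have slot: "ofs jt t + i < Zj" if "i < jt t" for i
    unfolding Zj_def using ofs_slot_lt[of t N i jt] t that by simp
  have kk: "n - m = k" by (simp add: k_def)
  show "vadd (mvmult n (mpow n (downshift n) (n - m)) (x1v w1 q1 ls t)) (mvmult n (mpow n (downshift n) 0) (x2v w2 t)) j
       = y1v w1 (xor q1 (Dm w2)) t j"
  proof (cases "1 \<le> t")
    case False
    then show ?thesis by (simp add: vadd_def mvmult_downshift mvmult_mone x1v_def x2v_def y1v_def)
  next
    case True
    note lsT = ls[OF True]
    show ?thesis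
    proof -
      consider "j \<le> k" | "k+1 \<le> j \<and> j \<le> k+e" | "k+e+1 \<le> j \<and> j \<le> k+e+jt t" | "k+e+jt t+1 \<le> j \<and> j \<le> n" | "n < j"
        by linarith
      then show ?thesis
      proof cases
        case 1
        then show ?thesis using params
          by (simp add: vadd_def mvmult_downshift mvmult_mone kk x1v_def x2v_def y1v_def)
      next
        case 2
        then obtain i where j0: "j = k+1+i" using le_Suc_ex[of "k+1" j] by blast
        then have j: "j = k+1+i" "i < e" using 2 by linarith+
        have x1p: "x1v w1 q1 ls t (j-k) = (bit w1 ((t-1)*e + i) \<noteq> bit w2 ((t-1)*e+i))"
          using j True lsT unfolding x1v_def by (simp add: bit_lnk)
        have x2p: "x2v w2 t j = bit w2 ((t-1)*e + i)"
          using j True unfolding x2v_def by simp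
        have y1p: "y1v w1 (xor q1 (Dm w2)) t j = bit w1 ((t-1)*e + i)"
          using j True unfolding y1v_def by simp
        have jr: "1 \<le> j" "j \<le> n" "k + 1 \<le> j" using j params by linarith+
        have "vadd (mvmult n (mpow n (downshift n) (n - m)) (x1v w1 q1 ls t)) (mvmult n (mpow n (downshift n) 0) (x2v w2 t)) j
            = (x1v w1 q1 ls t (j-k) \<noteq> x2v w2 t j)"
          unfolding vadd_def mvmult_downshift mvmult_mone kk using jr by simp
        moreover have "(x1v w1 q1 ls t (j-k) \<noteq> x2v w2 t j) = bit w1 ((t-1)*e+i)"
          unfolding x1p x2p by blast
        ultimately show ?thesis unfolding y1p by (rule trans)
      next
        case 3
        then obtain i where j0: "j = k+e+1+i" using le_Suc_ex[of "k+e+1" j] by blast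
        then have j: "j = k+e+1+i" "i < jt t" using 3 by linarith+
        have "jt t \<le> J" by (rule params)
        then have "k + e + jt t \<le> n" using params by linarith
        then show ?thesis using j params True slot[of i]
          by (simp add: vadd_def mvmult_downshift mvmult_mone kk x1v_def x2v_def y1v_def bit_xor_iff bit_Dm)
      next
        case 4
        then obtain i where j0: "j = k+e+jt t+1+i" using le_Suc_ex[of "k+e+jt t+1" j] by blast
        have jr: "1 \<le> j" "j \<le> n" "k + 1 \<le> j" using j0 4 params by linarith+
        have jm: "j - k = e + jt t + 1 + i" "e + jt t + 1 + i \<le> m" using j0 4 params by linarith+
        have x1p: "x1v w1 q1 ls t (j-k) = bit w1 (Bc + ofs ft t + i)"
          using True jm unfolding x1v_def by simp
        have x2p: "x2v w2 t j = False"
          using j0 unfolding x2v_def by simp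
        have y1p: "y1v w1 (xor q1 (Dm w2)) t j = bit w1 (Bc + ofs ft t + i)"
          using j0 jr True unfolding y1v_def by simp
        have "vadd (mvmult n (mpow n (downshift n) (n - m)) (x1v w1 q1 ls t)) (mvmult n (mpow n (downshift n) 0) (x2v w2 t)) j
            = (x1v w1 q1 ls t (j-k) \<noteq> x2v w2 t j)"
          unfolding vadd_def mvmult_downshift mvmult_mone kk using jr by simp
        then show ?thesis unfolding y1p x1p x2p by simp
      next
        case 5
        have "k+e+jt t \<le> n" using params(4) params(5)[of t] by linarith
        then show ?thesis using 5 params by (simp add: vadd_def mvmult_downshift mvmult_mone kk y1v_def)
      qed
    qed
  qed
qed


definition pat1 :: "nat \<Rightarrow> f2vec list \<Rightarrow> bool" where
  "pat1 w y \<longleftrightarrow> (\<forall>t. 1 \<le> t \<and> t < N \<longrightarrow> (\<forall>i<e. (y!t) (k+1+i) = bit w ((t-1)*e+i)) \<and>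
      (\<forall>i<ft t. (y!t) (k+e+jt t+1+i) = bit w (Bc + ofs ft t + i)))"

definition pat2 :: "nat \<Rightarrow> f2vec list \<Rightarrow> bool" where
  "pat2 w y \<longleftrightarrow> (\<forall>t. 1 \<le> t \<and> t < N \<longrightarrow> (\<forall>i<e. (y!t) (2*k+1+i) = bit w ((t-1)*e+i)) \<and>
      (\<forall>i<jt t. (y!t) (2*k+e+1+i) = bit w (Bc + ofs jt t + i)))"

definition "dec1f y = (SOME w. w < M1n \<and> pat1 w y)"
definition "dec2f y = (SOME w. w < M2n \<and> pat2 w y)"

definition cd :: code where
  "cd = \<lparr>M1 = M1n, M2 = M2n, P1 = pmf_of_set {..<2^Zj}, P2 = return_pmf 0,
         enc1 = (\<lambda>t w1 q1 ls. x1v w1 q1 ls t), enc2 = (\<lambda>t w2 q2. x2v w2 t),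
         link = (\<lambda>s w2 q2. lnk s w2), dec1 = dec1f, dec2 = dec2f\<rparr>"

lemma Y1cd: "Y1 m n N cd \<omega> = map (\<lambda>t. y1v (W1v \<omega>) (xor (fst (snd (snd \<omega>))) (Dm (W2v \<omega>))) t) [0..<N]"
proof -
  obtain w1 w2 q1 q2 where \<omega>: "\<omega> = (w1, w2, q1, q2)" by (cases \<omega>) auto
  show ?thesis unfolding Y1_eq[OF mn(1)]
  proof (rule map_cong[OF refl])
    fix t assume "t \<in> set [0..<N]"
    then have t: "t < N" by simp
    have "x1 cd \<omega> t = x1v w1 q1 (map (\<lambda>s. lnk s w2) [0..<t]) t"
      by (simp add: \<omega> x1_def cd_def)
    moreover have "x2 cd \<omega> t = x2v w2 t" by (simp add: \<omega> x2_def cd_def)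
    moreover have "1 \<le> t \<Longrightarrow> map (\<lambda>s. lnk s w2) [0..<t] ! (t-1) = lnk (t-1) w2" by simp
    ultimately show "vadd (mvmult n (mpow n (downshift n) (n - m)) (x1 cd \<omega> t)) (mvmult n (mpow n (downshift n) 0) (x2 cd \<omega> t))
        = y1v (W1v \<omega>) (xor (fst (snd (snd \<omega>))) (Dm (W2v \<omega>))) t"
      using y1_entry[OF t] by (simp add: \<omega> W1v_def W2v_def)
  qed
qed

lemma Y2cd: "Y2 m n N cd \<omega> = map (\<lambda>t. y2v (W2v \<omega>) t) [0..<N]"
  unfolding Y2_eq[OF mn(1)]
  by (cases \<omega>) (auto simp: x2_def cd_def W2v_def y2v_def fun_eq_iff mvmult_downshift k_def)

lemma pat1_true: "pat1 (W1v \<omega>) (Y1 m n N cd \<omega>)"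
  unfolding pat1_def Y1cd
proof (intro allI impI conjI)
  fix t i assume t: "1 \<le> t \<and> t < N"
  { assume i: "i < e"
    then show "(map (\<lambda>t. y1v (W1v \<omega>) (xor (fst (snd (snd \<omega>))) (Dm (W2v \<omega>))) t) [0..<N] ! t) (k+1+i) = bit (W1v \<omega>) ((t-1)*e+i)"
      using t by (simp add: y1v_def) }
  { assume i: "i < ft t"
    have "k+e+jt t+1+i \<le> n" using i t params(3,6) params(5)[of t] unfolding ft_def by auto
    then show "(map (\<lambda>t. y1v (W1v \<omega>) (xor (fst (snd (snd \<omega>))) (Dm (W2v \<omega>))) t) [0..<N] ! t) (k+e+jt t+1+i) = bit (W1v \<omega>) (Bc + ofs ft t + i)"
      using t by (simp add: y1v_def) }
qed

lemma pat2_true: "pat2 (W2v \<omega>) (Y2 m n N cd \<omega>)"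
  unfolding pat2_def Y2cd
proof (intro allI impI conjI)
  fix t i assume t: "1 \<le> t \<and> t < N"
  { assume i: "i < e"
    have "2*k+1+i \<le> n" using i params by linarith
    then show "(map (y2v (W2v \<omega>)) [0..<N] ! t) (2*k+1+i) = bit (W2v \<omega>) ((t-1)*e+i)"
      using t i by (simp add: y2v_def x2v_def) }
  { assume i: "i < jt t"
    have "2*k+e+1+i \<le> n" using i params(4) params(5)[of t] by linarith
    then show "(map (y2v (W2v \<omega>)) [0..<N] ! t) (2*k+e+1+i) = bit (W2v \<omega>) (Bc + ofs jt t + i)"
      using t i by (simp add: y2v_def x2v_def) }
qed

lemma cancel_slot:
  assumes "i < Bc"
  obtains t r where "1 \<le> t" "t < N" "r < e" "i = (t-1)*e + r"
proof -
  have e0: "0 < e" using assms by (cases "e = 0") (auto simp: Bc_def)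
  have "i div e < N - 1" using assms e0 by (simp add: Bc_def div_less_iff_less_mult)
  then show ?thesis using that[of "i div e + 1" "i mod e"] e0 by simp
qed

lemma uniq1:
  assumes "w < 2^(Bc + ofs ft N)" "w' < 2^(Bc + ofs ft N)" "pat1 w y" "pat1 w' y"
  shows "w = w'"
proof (rule bits_eq_unique[OF assms(1,2)])
  fix i assume i: "i < Bc + ofs ft N"
  show "bit w i = bit w' i"
  proof (cases "i < Bc")
    case True
    then obtain t r where tr: "1 \<le> t" "t < N" "r < e" "i = (t-1)*e + r" by (rule cancel_slot)
    then show ?thesis using assms(3,4) unfolding pat1_def by metis
  next
    case False
    then have "i - Bc < ofs ft N" using i by linarith
    then obtain t where t: "t < N" "ofs ft t \<le> i - Bc" "i - Bc < ofs ft t + ft t" using ofs_cover by blast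
    then have t1: "1 \<le> t" by (cases t) (auto simp: ft_def)
    define r where "r = i - Bc - ofs ft t"
    have r: "r < ft t" "i = Bc + ofs ft t + r" using t False unfolding r_def by linarith+
    show ?thesis using assms(3,4) r t t1 unfolding pat1_def by metis
  qed
qed

lemma uniq2:
  assumes "w < 2^(Bc + Zj)" "w' < 2^(Bc + Zj)" "pat2 w y" "pat2 w' y"
  shows "w = w'"
proof (rule bits_eq_unique[OF assms(1,2)])
  fix i assume i: "i < Bc + Zj"
  show "bit w i = bit w' i"
  proof (cases "i < Bc")
    case True
    then obtain t r where tr: "1 \<le> t" "t < N" "r < e" "i = (t-1)*e + r" by (rule cancel_slot)
    then show ?thesis using assms(3,4) unfolding pat2_def by metis
  next
    case False
    then have "i - Bc < ofs jt N" using i unfolding Zj_def by linarith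
    then obtain t where t: "t < N" "ofs jt t \<le> i - Bc" "i - Bc < ofs jt t + jt t" using ofs_cover by blast
    then have t1: "1 \<le> t" by (cases t) (auto simp: jt_def)
    define r where "r = i - Bc - ofs jt t"
    have r: "r < jt t" "i = Bc + ofs jt t + r" using t False unfolding r_def by linarith+
    show ?thesis using assms(3,4) r t t1 unfolding pat2_def by metis
  qed
qed

lemma M_cd: "M1 cd = M1n" "M2 cd = M2n" by (simp_all add: cd_def)

lemma err_zero:
  assumes "0 < M1n" "0 < M2n" "M1n \<le> 2^(Bc + ofs ft N)" "M2n \<le> 2^(Bc + Zj)"
  shows "err_prob m n N cd = 0"
proof -
  have ok: "dec1 cd (Y1 m n N cd \<omega>) = W1v \<omega> \<and> dec2 cd (Y2 m n N cd \<omega>) = W2v \<omega>" if \<omega>: "\<omega> \<in> set_pmf (src cd)" for \<omega>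
  proof
    have w: "W1v \<omega> < M1n" "W2v \<omega> < M2n" using set_src[of cd \<omega>] \<omega> assms(1,2) by (auto simp: M_cd)
    have dc: "dec1 cd = dec1f" "dec2 cd = dec2f" by (simp_all add: cd_def)
    show "dec1 cd (Y1 m n N cd \<omega>) = W1v \<omega>" unfolding dc dec1f_def
    proof (rule some_equality)
      show "W1v \<omega> < M1n \<and> pat1 (W1v \<omega>) (Y1 m n N cd \<omega>)" using w pat1_true by simp
      fix v assume v: "v < M1n \<and> pat1 v (Y1 m n N cd \<omega>)"
      have "v < 2^(Bc + ofs ft N)" "W1v \<omega> < 2^(Bc + ofs ft N)" using v w assms(3) by linarith+
      then show "v = W1v \<omega>" using uniq1 v pat1_true by blast
    qed
    show "dec2 cd (Y2 m n N cd \<omega>) = W2v \<omega>" unfolding dc dec2f_def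
    proof (rule some_equality)
      show "W2v \<omega> < M2n \<and> pat2 (W2v \<omega>) (Y2 m n N cd \<omega>)" using w pat2_true by simp
      fix v assume v: "v < M2n \<and> pat2 v (Y2 m n N cd \<omega>)"
      have "v < 2^(Bc + Zj)" "W2v \<omega> < 2^(Bc + Zj)" using v w assms(4) by linarith+
      then show "v = W2v \<omega>" using uniq2 v pat2_true by blast
    qed
  qed
  have "set_pmf (src cd) \<inter> {\<omega>. dec1 cd (Y1 m n N cd \<omega>) \<noteq> W1v \<omega> \<or> dec2 cd (Y2 m n N cd \<omega>) \<noteq> W2v \<omega>} = {}"
    using ok by blast
  then show ?thesis unfolding err_prob_def by (simp add: measure_pmf_zero_iff)
qed


lemma link_lt: "lnk s w2 < 2 ^ C"
proof -
  have "lnk s w2 < 2 ^ e" unfolding lnk_def by (rule take_bit_nat_less_exp)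
  also have "(2::nat) ^ e \<le> 2 ^ C" using params(2) by (simp add: power_increasing)
  finally show ?thesis .
qed

lemma link_cd: "link cd s w2 q2 < 2 ^ C"
  by (simp add: cd_def link_lt)

lemma sec_Y1:
  assumes M: "0 < M1n" "0 < M2n"
  shows "MI cd W2v (Y1 m n N cd) = 0"
proof -
  define \<mu> where "\<mu> = src cd"
  define T where "T = (\<lambda>(w1::nat,w2::nat,q1::nat,q2::nat). (w1, w2, xor q1 (Dm w2), q2))"
  define F where "F = (\<lambda>(w1::nat,q1::nat). map (\<lambda>t. y1v w1 q1 t) [0..<N])"
  define \<Psi> where "\<Psi> \<omega> = F (fst \<omega>, fst (snd (snd \<omega>)))" for \<omega> :: "nat \<times> nat \<times> nat \<times> nat"
  have Tsrc: "map_pmf T \<mu> = \<mu>"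
    unfolding T_def \<mu>_def by (rule src_shift) (auto simp: Dm_def cd_def take_bit_nat_less_exp)
  have Y1T: "Y1 m n N cd \<omega> = \<Psi> (T \<omega>)" for \<omega>
    by (cases \<omega>) (simp add: Y1cd \<Psi>_def F_def T_def W1v_def W2v_def)
  have W2T: "W2v (T \<omega>) = W2v \<omega>" for \<omega> by (cases \<omega>) (simp add: T_def W2v_def)
  have "map_pmf (\<lambda>\<omega>. (W2v \<omega>, Y1 m n N cd \<omega>)) \<mu> = map_pmf (\<lambda>\<omega>. (W2v \<omega>, \<Psi> \<omega>)) (map_pmf T \<mu>)"
    by (simp add: map_pmf_comp Y1T W2T)
  also have "\<dots> = map_pmf (\<lambda>\<omega>. (W2v \<omega>, \<Psi> \<omega>)) \<mu>" using Tsrc by simp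
  also have "\<dots> = map_pmf prod.swap (map_pmf (\<lambda>\<omega>. (F (fst \<omega>, fst (snd (snd \<omega>))), fst (fst (snd \<omega>), snd (snd (snd \<omega>))))) \<mu>)"
    by (simp add: map_pmf_comp \<Psi>_def W2v_def split_def)
  also have "\<dots> = map_pmf prod.swap (pair_pmf (map_pmf \<Psi> \<mu>) (map_pmf W2v \<mu>))"
  proof -
    have p1: "\<Psi> = (\<lambda>\<omega>. F (fst \<omega>, fst (snd (snd \<omega>))))" by (rule ext) (simp add: \<Psi>_def)
    have p2: "W2v = (\<lambda>\<omega>. fst (fst (snd \<omega>), snd (snd (snd \<omega>))))" by (auto simp: fun_eq_iff W2v_def split_def)
    show ?thesis unfolding p1 p2 \<mu>_def by (subst src_indep) (rule refl)
  qed
  also have "\<dots> = pair_pmf (map_pmf W2v \<mu>) (map_pmf \<Psi> \<mu>)"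
    by (simp add: pair_commute_pmf[of "map_pmf W2v \<mu>"] map_pmf_comp split_def) (rule map_pmf_cong; auto)
  also have "map_pmf \<Psi> \<mu> = map_pmf (Y1 m n N cd) \<mu>"
    by (subst Tsrc[symmetric], simp add: map_pmf_comp, rule map_pmf_cong, auto simp: Y1T)
  finally have eq: "map_pmf (\<lambda>\<omega>. (W2v \<omega>, Y1 m n N cd \<omega>)) \<mu> = pair_pmf (map_pmf W2v \<mu>) (map_pmf (Y1 m n N cd) \<mu>)" .
  have fin: "finite ((\<lambda>\<omega>. (W2v \<omega>, Y1 m n N cd \<omega>)) ` set_pmf \<mu>)"
  proof (rule fin_imgI[of "{..<M2n} \<times> lsts N (vecs {1..max m n})"])
    show "finite ({..<M2n} \<times> lsts N (vecs {1..max m n}))"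
      by (intro finite_cartesian_product finite_lessThan lsts_finite_card vecs_finite_card) simp
    fix \<omega> assume "\<omega> \<in> set_pmf \<mu>"
    then have "W2v \<omega> < M2n" using set_src[of cd \<omega>] M by (auto simp: M_cd \<mu>_def)
    then show "(W2v \<omega>, Y1 m n N cd \<omega>) \<in> {..<M2n} \<times> lsts N (vecs {1..max m n})"
      using Y1_mem[of m n N cd \<omega>] by simp
  qed
  show ?thesis unfolding MI_def \<mu>_def[symmetric]
    by (subst mi_zero_iff) (use fin eq countable_range_src in auto)
qed

lemma sec_Y2:
  assumes M: "0 < M1n" "0 < M2n"
  shows "MI cd W1v (Y2 m n N cd) = 0"
proof -
  define \<mu> where "\<mu> = src cd"
  define G where "G = (\<lambda>(w2::nat,q2::nat). map (\<lambda>t. y2v w2 t) [0..<N])"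
  have eq: "map_pmf (\<lambda>\<omega>. (W1v \<omega>, Y2 m n N cd \<omega>)) \<mu> = pair_pmf (map_pmf W1v \<mu>) (map_pmf (Y2 m n N cd) \<mu>)"
  proof -
    have e1: "(\<lambda>\<omega>. (W1v \<omega>, Y2 m n N cd \<omega>)) = (\<lambda>\<omega>. (fst (fst \<omega>, fst (snd (snd \<omega>))), G (fst (snd \<omega>), snd (snd (snd \<omega>)))))"
      by (auto simp: fun_eq_iff Y2cd G_def W1v_def W2v_def split_def)
    have e2: "W1v = (\<lambda>\<omega>. fst (fst \<omega>, fst (snd (snd \<omega>))))" by (auto simp: fun_eq_iff W1v_def split_def)
    have e3: "Y2 m n N cd = (\<lambda>\<omega>. G (fst (snd \<omega>), snd (snd (snd \<omega>))))"
      by (auto simp: fun_eq_iff Y2cd G_def W2v_def split_def)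
    show ?thesis unfolding e1 e3 e2 \<mu>_def by (rule src_indep)
  qed
  have fin: "finite ((\<lambda>\<omega>. (W1v \<omega>, Y2 m n N cd \<omega>)) ` set_pmf \<mu>)"
  proof (rule fin_imgI[of "{..<M1n} \<times> lsts N (vecs {1..max m n})"])
    show "finite ({..<M1n} \<times> lsts N (vecs {1..max m n}))"
      by (intro finite_cartesian_product finite_lessThan lsts_finite_card vecs_finite_card) simp
    fix \<omega> assume "\<omega> \<in> set_pmf \<mu>"
    then have "W1v \<omega> < M1n" using set_src[of cd \<omega>] M by (auto simp: M_cd \<mu>_def)
    then show "(W1v \<omega>, Y2 m n N cd \<omega>) \<in> {..<M1n} \<times> lsts N (vecs {1..max m n})"
      using Y2_mem[of m n N cd \<omega>] by simp
  qed
  show ?thesis unfolding MI_def \<mu>_def[symmetric]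
    by (subst mi_zero_iff) (use fin eq countable_range_src in auto)
qed


lemma b_formulas:
  assumes "T0 \<le> N"
  shows "Zj = J * (N - max 1 T0)" "Bc + ofs ft N + Zj = (N - 1) * m"
proof -
  have "Zj = (\<Sum>s<N. if 1 \<le> s \<and> T0 \<le> s then J else 0)"
    unfolding Zj_def ofs_def jt_def ..
  also have "\<dots> = J * card {s\<in>{..<N}. 1 \<le> s \<and> T0 \<le> s}"
    by (simp add: sum.inter_filter[symmetric])
  also have "{s\<in>{..<N}. 1 \<le> s \<and> T0 \<le> s} = {max 1 T0..<N}" by auto
  finally show z: "Zj = J * (N - max 1 T0)" by simp
  have "ofs ft N + Zj = (\<Sum>s<N. ft s + jt s)" unfolding Zj_def ofs_def by (simp add: sum.distrib)
  also have "\<dots> = (\<Sum>s<N. if 1 \<le> s then m - e else 0)"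
    by (intro sum.cong refl) (use params(3) params(5) in \<open>auto simp: ft_def jt_def\<close>)
  also have "\<dots> = (m - e) * card {s\<in>{..<N}. 1 \<le> s}"
    by (simp add: sum.inter_filter[symmetric])
  also have "{s\<in>{..<N}. 1 \<le> s} = {1..<N}" by auto
  finally have "ofs ft N + Zj = (m - e) * (N - 1)" by simp
  moreover have "e \<le> m" using params(3) by linarith
  moreover have "(N - 1) * e + (m - e) * (N - 1) = (N - 1) * ((m - e) + e)" by (simp add: algebra_simps)
  ultimately show "Bc + ofs ft N + Zj = (N - 1) * m"
    unfolding Bc_def by (metis add.assoc le_add_diff_inverse2)
qed

end



lemma M_le:
  assumes "real N * R \<le> real b"
  shows "nat \<lceil>2 powr (real N * R)\<rceil> \<le> 2^b"
proof -
  have "2 powr (real N * R) \<le> 2 powr real b" using assms by simp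
  also have "\<dots> = real (2^b)" by (simp add: powr_realpow)
  finally have "\<lceil>2 powr (real N * R)\<rceil> \<le> int (2^b)"
    by (simp add: ceiling_le_iff)
  then show ?thesis by (simp add: nat_le_iff)
qed

lemma ev_lin:
  fixes b :: "nat \<Rightarrow> nat" and R a K :: real
  assumes "R = 0 \<or> R < a" "\<And>N. real N * a - K \<le> real (b N)"
  shows "\<exists>N0. \<forall>N\<ge>N0. real N * R \<le> real (b N)"
proof (cases "R = 0")
  case True then show ?thesis by auto
next
  case False
  then have Ra: "R < a" using assms(1) by auto
  obtain N0 :: nat where N0: "K / (a - R) \<le> real N0" using real_arch_simple by blast
  show ?thesis
  proof (intro exI allI impI)
    fix N assume "N0 \<le> N"
    then have "K / (a - R) \<le> real N" using N0 by linarith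
    then have "K \<le> real N * (a - R)" using Ra by (simp add: divide_le_eq mult.commute)
    then show "real N * R \<le> real (b N)" using assms(2)[of N] by (simp add: algebra_simps)
  qed
qed

lemma achievable_pt:
  fixes m n C :: nat and lam R1 R2 :: real
  assumes mn: "m < n" "n < 2*m" and lam: "0 \<le> lam" "lam \<le> 1" and R: "0 \<le> R1" "0 \<le> R2"
    and h1: "R1 = 0 \<or> R1 < real m - (1 - lam) * real (2*m - n - min C (2*m-n))"
    and h2: "R2 = 0 \<or> R2 < real (min C (2*m-n)) + (1 - lam) * real (2*m - n - min C (2*m-n))"
  shows "achievable m n C (R1, R2)"
proof -
  define e where "e = min C (2*m-n)"
  define J where "J = 2*m - n - e"
  define T0 where "T0 N = nat \<lceil>lam * real N\<rceil>" for N :: nat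
  define M1n where "M1n N = nat \<lceil>2 powr (real N * R1)\<rceil>" for N :: nat
  define M2n where "M2n N = nat \<lceil>2 powr (real N * R2)\<rceil>" for N :: nat
  define cs where "cs N = scheme.cd m n C N (T0 N) (M1n N) (M2n N)" for N
  define Q where "Q N = N - max 1 (T0 N)" for N
  define b1 where "b1 N = (N - 1) * m - J * Q N" for N
  define b2 where "b2 N = (N - 1) * e + J * Q N" for N
  have sch: "scheme m n" by unfold_locales (use mn in auto)
  have T0N: "T0 N \<le> N" for N
  proof -
    have "lam * real N \<le> real N" using lam by (simp add: mult_left_le_one_le)
    then show ?thesis unfolding T0_def by (simp add: nat_le_iff ceiling_le_iff)
  qed
  have Mp: "0 < M1n N" "0 < M2n N" for N unfolding M1n_def M2n_def by (rule M_pos)+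
  have Q_up: "real (Q N) \<le> (1 - lam) * real N" for N
  proof -
    have a: "lam * real N \<le> real (T0 N)" unfolding T0_def by linarith
    have "real (Q N) \<le> real (N - T0 N)" unfolding Q_def by simp
    also have "\<dots> = real N - real (T0 N)" using T0N[of N] by (simp add: of_nat_diff)
    finally show ?thesis using a by (simp add: algebra_simps)
  qed
  have Q_low: "(1 - lam) * real N - 2 \<le> real (Q N)" for N
  proof -
    have "real (T0 N) \<le> lam * real N + 1"
      unfolding T0_def using lam by (simp add: of_nat_nat ceiling_less_iff)
    then have b: "real (max 1 (T0 N)) \<le> lam * real N + 2" by simp
    have "real (Q N) \<ge> real N - real (max 1 (T0 N))" unfolding Q_def by (simp add: of_nat_diff)
    then show ?thesis using b by (simp add: algebra_simps)
  qed
  have secure: "secure_code m n C N R1 R2 (cs N)" for N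
  proof -
    interpret S: scheme m n C N "T0 N" "M1n N" "M2n N" by (rule sch)
    show ?thesis unfolding secure_code_def cs_def
      using S.M_cd S.sec_Y1[OF Mp] S.sec_Y2[OF Mp] S.link_cd
      by (simp add: M1n_def M2n_def)
  qed
  have bform: "S_b1 = b1 N \<and> S_b2 = b2 N" if "S_b1 = scheme.Bc m n C N + ofs (scheme.ft m n C (T0 N)) N"
     "S_b2 = scheme.Bc m n C N + scheme.Zj m n C N (T0 N)" for N S_b1 S_b2
  proof -
    interpret S: scheme m n C N "T0 N" "M1n N" "M2n N" by (rule sch)
    have eq: "S.e = e" "S.J = J" by (simp_all add: S.e_def S.J_def e_def J_def)
    have z: "S.Zj = J * Q N" using S.b_formulas(1)[OF T0N] by (simp add: eq Q_def)
    have s: "S.Bc + ofs S.ft N + S.Zj = (N - 1) * m" by (rule S.b_formulas(2)[OF T0N])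
    show ?thesis using that z s unfolding b1_def b2_def S.Bc_def eq by simp
  qed
  have err0: "err_prob m n N (cs N) = 0" if "real N * R1 \<le> real (b1 N)" "real N * R2 \<le> real (b2 N)" for N
  proof -
    interpret S: scheme m n C N "T0 N" "M1n N" "M2n N" by (rule sch)
    have eqs: "S.Bc + ofs S.ft N = b1 N" "S.Bc + S.Zj = b2 N" using bform[OF refl refl, of N] by auto
    have "M1n N \<le> 2^(b1 N)" unfolding M1n_def by (rule M_le) (rule that(1))
    moreover have "M2n N \<le> 2^(b2 N)" unfolding M2n_def by (rule M_le) (rule that(2))
    ultimately show ?thesis unfolding cs_def
      by (intro S.err_zero Mp) (simp_all add: eqs)
  qed
  have JQ: "J * Q N \<le> (N - 1) * m" for N
  proof -
    have "J \<le> m" using mn unfolding J_def e_def by linarith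
    moreover have "Q N \<le> N - 1" unfolding Q_def by simp
    ultimately show ?thesis by (metis mult.commute mult_le_mono)
  qed
  have b1_low: "real N * (real m - (1 - lam) * real J) - real m \<le> real (b1 N)" for N
  proof -
    have "real (b1 N) = real ((N-1)*m) - real J * real (Q N)"
      unfolding b1_def using of_nat_diff[OF JQ[of N], where 'a=real] by simp
    moreover have "real ((N-1)*m) \<ge> real N * real m - real m"
      by (cases N) (simp_all add: algebra_simps)
    moreover have "real J * real (Q N) \<le> real J * ((1 - lam) * real N)" by (intro mult_left_mono Q_up) simp
    ultimately show ?thesis by (simp add: algebra_simps)
  qed
  have b2_low: "real N * (real e + (1 - lam) * real J) - (real e + 2 * real J) \<le> real (b2 N)" for N
  proof -
    have "real (b2 N) = real ((N-1)*e) + real J * real (Q N)" unfolding b2_def by simp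
    moreover have "real ((N-1)*e) \<ge> real N * real e - real e"
      by (cases N) (simp_all add: algebra_simps)
    moreover have "real J * ((1 - lam) * real N - 2) \<le> real J * real (Q N)" by (intro mult_left_mono Q_low) simp
    ultimately show ?thesis by (simp add: algebra_simps)
  qed
  obtain N1 where N1: "\<forall>N\<ge>N1. real N * R1 \<le> real (b1 N)"
    using ev_lin[of R1 "real m - (1 - lam) * real J" "real m" b1] h1 b1_low unfolding J_def e_def by auto
  obtain N2 where N2: "\<forall>N\<ge>N2. real N * R2 \<le> real (b2 N)"
    using ev_lin[of R2 "real e + (1 - lam) * real J" "real e + 2 * real J" b2] h2 b2_low unfolding J_def e_def by auto
  have "eventually (\<lambda>N. err_prob m n N (cs N) = 0) sequentially"
    unfolding eventually_sequentially using N1 N2 err0 by (intro exI[of _ "max N1 N2"]) auto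
  then have lim: "(\<lambda>N. err_prob m n N (cs N)) \<longlonglongrightarrow> 0" by (rule tendsto_eventually)
  show ?thesis unfolding achievable_def using R secure lim by auto
qed



lemma region_closed:
  "closed {(R1, R2). 0 \<le> R1 \<and> 0 \<le> R2 \<and> R1 \<le> real m \<and> R2 \<le> 2 * real m - real n \<and>
               R1 + R2 \<le> real m + real C}"
proof -
  have eq: "{(R1, R2). 0 \<le> R1 \<and> 0 \<le> R2 \<and> R1 \<le> real m \<and> R2 \<le> 2 * real m - real n \<and>
               R1 + R2 \<le> real m + real C} =
      {x::real\<times>real. 0 \<le> fst x} \<inter> {x. 0 \<le> snd x} \<inter> {x. fst x \<le> real m} \<inter> {x. snd x \<le> 2 * real m - real n}
      \<inter> {x. fst x + snd x \<le> real m + real C}" by auto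
  show ?thesis unfolding eq
    by (intro closed_Int closed_Collect_le continuous_intros)
qed

lemma scale_ok:
  fixes s R a :: real
  assumes "0 \<le> s" "s < 1" "0 \<le> R" "R \<le> a"
  shows "s * R = 0 \<or> s * R < a"
proof (cases "s = 0 \<or> R = 0")
  case True then show ?thesis by auto
next
  case False
  then have "s * R < R" using assms by (simp add: mult_less_cancel_right2)
  then show ?thesis using assms by auto
qed

theorem theorem2:
  fixes m n C :: nat
  assumes "m \<ge> 1"
    and "1 < real n / real m" and "real n / real m < 2"
  shows "secrecy_capacity_region m n C =
    {(R1, R2). 0 \<le> R1 \<and> 0 \<le> R2 \<and> R1 \<le> real m \<and> R2 \<le> 2 * real m - real n \<and>
               R1 + R2 \<le> real m + real C}"
proof -
  have mpos: "0 < real m" using assms(1) by simp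
  have mn: "m < n" "n < 2*m"
  proof -
    have "real m < real n" using assms(2) mpos by (simp add: less_divide_eq)
    then show "m < n" by simp
    have "real n < 2 * real m" using assms(3) mpos by (simp add: divide_less_eq)
    then show "n < 2*m" by linarith
  qed
  define S where "S = {(R1, R2). 0 \<le> R1 \<and> 0 \<le> R2 \<and> R1 \<le> real m \<and> R2 \<le> 2 * real m - real n \<and>
               R1 + R2 \<le> real m + real C}"
  have sub: "{R. achievable m n C R} \<subseteq> S"
  proof
    fix R assume "R \<in> {R. achievable m n C R}"
    then obtain R1 R2 where R: "R = (R1, R2)" "achievable m n C (R1, R2)" by (cases R) auto
    then have "0 \<le> R1" "0 \<le> R2" unfolding achievable_def by auto
    then show "R \<in> S" using converse[OF mn R(2)] R(1) unfolding S_def by auto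
  qed
  have sup: "S \<subseteq> closure {R. achievable m n C R}"
  proof
    fix R assume "R \<in> S"
    then obtain R1 R2 where R: "R = (R1, R2)" "0 \<le> R1" "0 \<le> R2" "R1 \<le> real m" "R2 \<le> 2 * real m - real n"
      "R1 + R2 \<le> real m + real C" unfolding S_def by auto
    define e where "e = min C (2*m-n)"
    define J where "J = 2*m - n - e"
    have eJ: "real e + real J = 2 * real m - real n" unfolding J_def e_def using mn by (simp add: of_nat_diff)
    obtain lam where lam: "0 \<le> lam" "lam \<le> 1" "R1 \<le> real m - (1 - lam) * real J" "R2 \<le> real e + (1 - lam) * real J"
    proof (cases "R2 \<le> real e")
      case True
      then show ?thesis using that[of 1] R by simp
    next
      case False
      then have Jp: "0 < real J" using R(5) eJ by linarith
      have eC: "e = C"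
      proof (rule ccontr)
        assume "e \<noteq> C"
        then have "e = 2*m - n" unfolding e_def by auto
        then have "J = 0" unfolding J_def by simp
        then show False using Jp by simp
      qed
      define lam where "lam = 1 - (R2 - real e) / real J"
      have d: "(R2 - real e) / real J \<le> 1" "0 \<le> (R2 - real e) / real J"
        using Jp False R(5) eJ by (simp_all add: divide_le_eq)
      have t: "(1 - lam) * real J = R2 - real e" unfolding lam_def using Jp by simp
      show ?thesis
        by (rule that[of lam]) (use d t R(6) eC in \<open>auto simp: lam_def\<close>)
    qed
    define s where "s j = 1 - inverse (real (Suc j))" for j :: nat
    have s: "0 \<le> s j" "s j < 1" for j unfolding s_def by (auto simp: field_simps)
    have ach: "achievable m n C (s j * R1, s j * R2)" for j
      by (rule achievable_pt[OF mn lam(1,2)])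
         (use s R lam scale_ok in \<open>auto simp: e_def J_def\<close>)
    have lim: "(\<lambda>j. (s j * R1, s j * R2)) \<longlonglongrightarrow> (R1, R2)"
    proof -
      have "s \<longlonglongrightarrow> 1 - 0" unfolding s_def by (intro tendsto_intros LIMSEQ_inverse_real_of_nat)
      then have "s \<longlonglongrightarrow> 1" by simp
      then have "(\<lambda>j. s j * R1) \<longlonglongrightarrow> 1 * R1" "(\<lambda>j. s j * R2) \<longlonglongrightarrow> 1 * R2"
        using tendsto_mult_left[OF \<open>s \<longlonglongrightarrow> 1\<close>, of R1] tendsto_mult_left[OF \<open>s \<longlonglongrightarrow> 1\<close>, of R2] by (simp_all add: mult.commute)
      then show ?thesis by (auto intro!: tendsto_Pair)
    qed
    show "R \<in> closure {R. achievable m n C R}"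
      unfolding closure_sequential R(1) using ach lim by (intro exI[of _ "\<lambda>j. (s j * R1, s j * R2)"]) auto
  qed
  have "closure {R. achievable m n C R} = S"
  proof
    show "closure {R. achievable m n C R} \<subseteq> S"
      by (rule closure_minimal[OF sub]) (unfold S_def, rule region_closed)
  qed (rule sup)
  then show ?thesis unfolding secrecy_capacity_region_def S_def .
qed


end
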